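(* For positive integers $n$ and $r$, let $s=(2r,3r,\ldots,nr)$ and $\mu=(r,2r,\ldots,nr)$. Then \[ d_{n-1}^s(z)+d_n^\mu(z)=\sum_{\sigma\in\mathbb{Z}_r\wr\mathfrak{S}_n:\ S_\sigma=\emptyset}z^{\mathrm{des}(\sigma)}. \]
   Context: For a sequence $t=(t_1,\ldots,t_m)$ of positive integers, $P_m^t=\{x\in\mathbb{R}^m:0\le x_1/t_1\le\cdots\le x_m/t_m\le1\}$ and $d_m^t(z)=\ell^\ast(P_m^t;z)$, where for a lattice $d$-simplex $\Delta=\mathrm{conv}(v^{(0)},\ldots,v^{(d)})\subset\mathbb{R}^m$, $\ell^\ast(\Delta;z)=\sum_{x\in\Pi^\circ_\Delta\cap\mathbb{Z}^{m+1}}z^{x_{m+1}}$, $\Pi^\circ_\Delta=\{\sum_i\lambda_i(v^{(i)},1):0<\lambda_i<1\}$. $\mathbb{Z}_r\wr\mathfrak{S}_n$ is the set of $r$-colored permutations $\sigma=\pi_1^{c_1}\cdots\pi_n^{c_n}$ ($\pi\in\mathfrak{S}_n$, $c_i\in\{0,\ldots,r-1\}$). With $\pi_{n+1}=n+1$, $c_{n+1}=0$, $i\in[n]$ is a descent if $c_i>c_{i+1}$, or $c_i=c_{i+1}$ and $\pi_i>\pi_{i+1}$; $\mathrm{des}(\sigma)$ counts descents. With conventions $\pi_0=0$, $c_0=0$, a number $i\in[n]$ is bad for $\sigma$ if, for $j$ with $\pi_j=i$: (1) $\pi_j<\pi_k$ for all $k>j$; (2) $\pi_{j-1}<\pi_k$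 for all $k>j-1$; (3) $c_j=c_{j-1}$. $S_\sigma$ is the set of bad numbers of $\sigma$. *)

theory Defs
  imports Complex_Main "HOL-Combinatorics.Permutations"
begin

text \<open>Points of R^m are modelled as functions nat => real, with coordinates
  indexed by 1..m and all other coordinates equal to 0.\<close>

definition Pset :: "nat \<Rightarrow> (nat \<Rightarrow> nat) \<Rightarrow> (nat \<Rightarrow> real) set" where
  "Pset m t = {x. (\<forall>j. j \<notin> {1..m} \<longrightarrow> x j = 0) \<and>
     (let y = (\<lambda>j. if j = 0 then 0 else if j = m + 1 then 1 else x j / real (t j))
      in \<forall>j\<le>m. y j \<le> y (Suc j))}"

definition vertices :: "(nat \<Rightarrow> real) set \<Rightarrow> (nat \<Rightarrow> real) set" where
  "vertices P = {v. v \<in> P \<and> \<not> (\<exists>a\<in>P. \<exists>b\<in>P. a \<noteq> b \<and>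
       (\<exists>u::real. 0 < u \<and> u < 1 \<and> v = (\<lambda>i. u * a i + (1 - u) * b i)))}"

text \<open>Lattice points of the open fundamental parallelepiped of a simplex with vertex
  set V: pairs (x, k) standing for the point (x_1,...,x_m, k) of Z^(m+1).\<close>
definition par_open_lattice :: "(nat \<Rightarrow> real) set \<Rightarrow> ((nat \<Rightarrow> int) \<times> nat) set" where
  "par_open_lattice V = {(x, k). \<exists>lam::(nat \<Rightarrow> real) \<Rightarrow> real.
       (\<forall>v\<in>V. 0 < lam v \<and> lam v < 1) \<and>
       (\<forall>j. real_of_int (x j) = (\<Sum>v\<in>V. lam v * v j)) \<and>
       real k = (\<Sum>v\<in>V. lam v)}"

definition lstar :: "(nat \<Rightarrow> real) set \<Rightarrow> real \<Rightarrow> real" where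
  "lstar V z = (\<Sum>p\<in>par_open_lattice V. z ^ snd p)"

definition d_poly :: "nat \<Rightarrow> (nat \<Rightarrow> nat) \<Rightarrow> real \<Rightarrow> real" where
  "d_poly m t z = lstar (vertices (Pset m t)) z"

text \<open>r-colored permutations of [n]: (pi, c) with pi in one-line notation
  pi_i = pi i and colours c_i = c i; conventions pi 0 = 0, pi (n+1) = n+1 come from
  permutes, and colours vanish outside 1..n.\<close>
definition colored_perms :: "nat \<Rightarrow> nat \<Rightarrow> ((nat \<Rightarrow> nat) \<times> (nat \<Rightarrow> nat)) set" where
  "colored_perms r n = {(\<pi>, c). \<pi> permutes {1..n} \<and> (\<forall>i\<in>{1..n}. c i < r) \<and>
       (\<forall>i. i \<notin> {1..n} \<longrightarrow> c i = 0)}"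

definition cdes :: "nat \<Rightarrow> (nat \<Rightarrow> nat) \<times> (nat \<Rightarrow> nat) \<Rightarrow> nat" where
  "cdes n \<sigma> = (case \<sigma> of (\<pi>, c) \<Rightarrow>
     card {i\<in>{1..n}. c i > c (Suc i) \<or> (c i = c (Suc i) \<and> \<pi> i > \<pi> (Suc i))})"

definition bad_set :: "nat \<Rightarrow> (nat \<Rightarrow> nat) \<times> (nat \<Rightarrow> nat) \<Rightarrow> nat set" where
  "bad_set n \<sigma> = (case \<sigma> of (\<pi>, c) \<Rightarrow>
     {i\<in>{1..n}. \<exists>j\<in>{1..n}. \<pi> j = i \<and>
        (\<forall>k\<in>{j<..n}. \<pi> j < \<pi> k) \<and>
        (\<forall>k\<in>{j..n}. \<pi> (j - 1) < \<pi> k) \<and>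
        c j = c (j - 1)})"

end

theory Submission
  imports Defs
begin

primrec Lr :: "nat \<Rightarrow> real \<Rightarrow> nat \<Rightarrow> nat \<Rightarrow> real" where
  "Lr r z 0 E = (if E < r then 1 else 0)"
| "Lr r z (Suc n) E = (\<Sum>E'<Suc n * r. (if E * Suc n = E' * Suc (Suc n) then 0
      else if E * Suc n < E' * Suc (Suc n) then z else 1) * Lr r z n E')"

primrec Rr :: "nat \<Rightarrow> real \<Rightarrow> nat \<Rightarrow> nat \<Rightarrow> real" where
  "Rr r z 0 E = (if E < r then (if 0 < E then z else 1) else 0)"
| "Rr r z (Suc n) E = (\<Sum>E'<Suc n * r. (if E * Suc n = E' * Suc (Suc n) then 0
      else if E' * Suc (Suc n) < E * Suc n then z else 1) * Rr r z n E')"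

definition phi :: "nat \<Rightarrow> nat \<Rightarrow> nat" where
  "phi N E = (if E = 0 then 0 else N - E)"

lemma phi_bij: "bij_betw (phi N) {..<N} {..<N}"
  by (rule bij_betwI[where g="phi N"]) (auto simp: phi_def)

lemma phi_lt: "E < N \<Longrightarrow> phi N E < N"
  by (auto simp: phi_def)

lemma w_swap:
  fixes z :: real
  assumes E: "E < Suc (Suc n) * r" and E': "E' < Suc n * r"
  shows "(if phi (Suc (Suc n) * r) E * Suc n = phi (Suc n * r) E' * Suc (Suc n) then 0
      else if phi (Suc n * r) E' * Suc (Suc n) < phi (Suc (Suc n) * r) E * Suc n then z else 1)
     * (if E' = 0 then 1 else z)
   = (if E = 0 then 1 else z) * (if E * Suc n = E' * Suc (Suc n) then 0
      else if E * Suc n < E' * Suc (Suc n) then z else 1)"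
proof (cases "E = 0")
  case True
  then show ?thesis using E' by (cases "E' = 0") (auto simp: phi_def)
next
  case False
  note EF = False
  show ?thesis
  proof (cases "E' = 0")
    case True
    then show ?thesis using EF E by (auto simp: phi_def)
  next
    case False
    define A where "A = Suc (Suc n) * r"
    define B where "B = Suc n * r"
    have AB: "A * Suc n = B * Suc (Suc n)" unfolding A_def B_def by (simp add: algebra_simps)
    have pE: "int (phi A E * Suc n) = int (A * Suc n) - int (E * Suc n)"
    proof -
      have "phi A E * Suc n = A * Suc n - E * Suc n" using EF unfolding phi_def by (simp only: if_False diff_mult_distrib)
      moreover have "E * Suc n \<le> A * Suc n" using E unfolding A_def by (intro mult_le_mono1) simp
      ultimately show ?thesis by (simp add: of_nat_diff)
    qed
    have pE': "int (phi B E' * Suc (Suc n)) = int (B * Suc (Suc n)) - int (E' * Suc (Suc n))"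
    proof -
      have "phi B E' * Suc (Suc n) = B * Suc (Suc n) - E' * Suc (Suc n)" using False unfolding phi_def by (simp only: if_False diff_mult_distrib)
      moreover have "E' * Suc (Suc n) \<le> B * Suc (Suc n)" using E' unfolding B_def by (intro mult_le_mono1) simp
      ultimately show ?thesis by (simp add: of_nat_diff)
    qed
    have e1: "(phi A E * Suc n = phi B E' * Suc (Suc n)) = (E * Suc n = E' * Suc (Suc n))"
    proof -
      have "(phi A E * Suc n = phi B E' * Suc (Suc n)) = (int (phi A E * Suc n) = int (phi B E' * Suc (Suc n)))"
        by linarith
      also have "\<dots> = (int (E * Suc n) = int (E' * Suc (Suc n)))" using pE pE' AB by (simp only:) linarith
      finally show ?thesis by linarith
    qed
    have e2: "(phi B E' * Suc (Suc n) < phi A E * Suc n) = (E * Suc n < E' * Suc (Suc n))"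
    proof -
      have "(phi B E' * Suc (Suc n) < phi A E * Suc n) = (int (phi B E' * Suc (Suc n)) < int (phi A E * Suc n))"
        by linarith
      also have "\<dots> = (int (E * Suc n) < int (E' * Suc (Suc n)))" using pE pE' AB by (simp only:) linarith
      finally show ?thesis by linarith
    qed
    show ?thesis using EF False e1 e2 unfolding A_def[symmetric] B_def[symmetric] by simp
  qed
qed

lemma RL:
  assumes "E < Suc n * r"
  shows "Rr r z n (phi (Suc n * r) E) = (if E = 0 then 1 else z) * Lr r z n E"
  using assms
proof (induction n arbitrary: E)
  case 0
  then show ?case by (auto simp: phi_def)
next
  case (Suc n)
  have "Rr r z (Suc n) (phi (Suc (Suc n) * r) E)
     = (\<Sum>E'<Suc n * r. (if phi (Suc (Suc n) * r) E * Suc n = E' * Suc (Suc n) then 0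
      else if E' * Suc (Suc n) < phi (Suc (Suc n) * r) E * Suc n then z else 1) * Rr r z n E')"
    by (simp only: Rr.simps)
  also have "\<dots> = (\<Sum>E'<Suc n * r. (if phi (Suc (Suc n) * r) E * Suc n = phi (Suc n * r) E' * Suc (Suc n) then 0
      else if phi (Suc n * r) E' * Suc (Suc n) < phi (Suc (Suc n) * r) E * Suc n then z else 1) * Rr r z n (phi (Suc n * r) E'))"
    by (rule sum.reindex_bij_betw[OF phi_bij, symmetric])
  also have "\<dots> = (\<Sum>E'<Suc n * r. (if E = 0 then 1 else z) * ((if E * Suc n = E' * Suc (Suc n) then 0
      else if E * Suc n < E' * Suc (Suc n) then z else 1) * Lr r z n E'))"
  proof (rule sum.cong[OF refl])
    fix E' assume "E' \<in> {..<Suc n * r}"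
    then have E': "E' < Suc n * r" by simp
    show "(if phi (Suc (Suc n) * r) E * Suc n = phi (Suc n * r) E' * Suc (Suc n) then 0
      else if phi (Suc n * r) E' * Suc (Suc n) < phi (Suc (Suc n) * r) E * Suc n then z else 1) * Rr r z n (phi (Suc n * r) E')
      = (if E = 0 then 1 else z) * ((if E * Suc n = E' * Suc (Suc n) then 0
      else if E * Suc n < E' * Suc (Suc n) then z else 1) * Lr r z n E')"
      using w_swap[OF Suc.prems E', of z] Suc.IH[OF E'] by (simp add: algebra_simps)
  qed
  also have "\<dots> = (if E = 0 then 1 else z) * Lr r z (Suc n) E"
    by (simp add: sum_distrib_left)
  finally show ?case .
qed

lemma arith_key:
  fixes K col c' a b :: nat
  assumes a: "a \<le> K" and b: "b < K"
  shows "(col*(K+1)+a)*K = (c'*K+b)*(K+1) \<longleftrightarrow> col = c' \<and> a = 0 \<and> b = 0"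
    and "(c'*K+b)*(K+1) < (col*(K+1)+a)*K \<longleftrightarrow> c' < col \<or> (c' = col \<and> b < a)"
proof -
  have L: "(col*(K+1)+a)*K = col*(K*(K+1)) + a*K" by (simp add: algebra_simps)
  have R: "(c'*K+b)*(K+1) = c'*(K*(K+1)) + b*(K+1)" by (simp add: algebra_simps)
  have bK: "b*(K+1) < K*(K+1)" using b by (intro mult_strict_right_mono) simp_all
  have aK: "a*K < K*(K+1)"
  proof -
    have "a*K \<le> K*K" using a by (intro mult_le_mono1)
    moreover have "K*K < K*(K+1)" using b by simp
    ultimately show ?thesis by linarith
  qed
  have c1: "c' < col \<Longrightarrow> c'*(K*(K+1)) + b*(K+1) < col*(K*(K+1)) + a*K"
  proof -
    assume "c' < col"
    then have "(c'+1)*(K*(K+1)) \<le> col*(K*(K+1))" by (intro mult_le_mono1) simp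
    then show ?thesis using bK by (simp add: algebra_simps)
  qed
  have c2: "col < c' \<Longrightarrow> col*(K*(K+1)) + a*K < c'*(K*(K+1)) + b*(K+1)"
  proof -
    assume "col < c'"
    then have "(col+1)*(K*(K+1)) \<le> c'*(K*(K+1))" by (intro mult_le_mono1) simp
    then show ?thesis using aK by (simp add: algebra_simps)
  qed
  have c3: "a*K = b*(K+1) \<longleftrightarrow> a = 0 \<and> b = 0"
    and c4: "b*(K+1) < a*K \<longleftrightarrow> b < a"
  proof -
    have x1: "a \<le> b \<Longrightarrow> a*K \<le> b*K" by simp
    have x2: "b < a \<Longrightarrow> b*(K+1) < a*K"
    proof -
      assume "b < a"
      then have "(b+1)*K \<le> a*K" by (intro mult_le_mono1) simp
      then show ?thesis using b by (simp add: algebra_simps)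
    qed
    have x3: "b*K \<le> b*(K+1)" by simp
    have x4: "b*K = b*(K+1) \<Longrightarrow> b = 0" by simp
    show "a*K = b*(K+1) \<longleftrightarrow> a = 0 \<and> b = 0"
    proof (cases "a \<le> b")
      case True
      then show ?thesis using x1 x3 x4 by (metis le_antisym mult_is_0 le_0_eq)
    next
      case False
      then show ?thesis using x2 by auto
    qed
    show "b*(K+1) < a*K \<longleftrightarrow> b < a"
    proof (cases "a \<le> b")
      case True
      then have "a*K \<le> b*(K+1)" using x1 x3 by linarith
      then show ?thesis using True by auto
    next
      case False
      then show ?thesis using x2 by auto
    qed
  qed
  have d1: "c' < col \<Longrightarrow> (c'*K+b)*(K+1) < (col*(K+1)+a)*K" unfolding L R by (rule c1)
  have d2: "col < c' \<Longrightarrow> (col*(K+1)+a)*K < (c'*K+b)*(K+1)" unfolding L R by (rule c2)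
  have d3: "col = c' \<Longrightarrow> (col*(K+1)+a)*K = (c'*K+b)*(K+1) \<longleftrightarrow> a*K = b*(K+1)" unfolding L R by simp
  have d4: "col = c' \<Longrightarrow> (c'*K+b)*(K+1) < (col*(K+1)+a)*K \<longleftrightarrow> b*(K+1) < a*K" unfolding L R by simp
  show "(col*(K+1)+a)*K = (c'*K+b)*(K+1) \<longleftrightarrow> col = c' \<and> a = 0 \<and> b = 0"
  proof (cases rule: linorder_cases[of c' col])
    case less then show ?thesis using d1 by (metis less_irrefl)
  next
    case equal then show ?thesis using c3 d3 by auto
  next
    case greater then show ?thesis using d2 by (metis less_irrefl)
  qed
  show "(c'*K+b)*(K+1) < (col*(K+1)+a)*K \<longleftrightarrow> c' < col \<or> (c' = col \<and> b < a)"
  proof (cases rule: linorder_cases[of c' col])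
    case less then show ?thesis using d1 by auto
  next
    case equal then show ?thesis using c4 d4 by auto
  next
    case greater then show ?thesis using d2 by auto
  qed
qed

definition shiftv :: "nat \<Rightarrow> nat \<Rightarrow> nat" where
  "shiftv v y = (if v \<le> y then Suc y else y)"
definition unshift :: "nat \<Rightarrow> nat \<Rightarrow> nat" where
  "unshift v y = (if v < y then y - 1 else y)"
definition consp :: "nat \<Rightarrow> nat \<Rightarrow> (nat \<Rightarrow> nat) \<Rightarrow> nat \<Rightarrow> nat" where
  "consp m v p = (\<lambda>i. if i = 1 then v else if i \<in> {2..Suc m} then shiftv v (p (i - 1)) else i)"
definition consc :: "nat \<Rightarrow> nat \<Rightarrow> (nat \<Rightarrow> nat) \<Rightarrow> nat \<Rightarrow> nat" where
  "consc m col c = (\<lambda>i. if i = 1 then col else if i \<in> {2..Suc m} then c (i - 1) else 0)"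
definition tailp :: "nat \<Rightarrow> (nat \<Rightarrow> nat) \<Rightarrow> nat \<Rightarrow> nat" where
  "tailp m p = (\<lambda>i. if i \<in> {1..m} then unshift (p 1) (p (Suc i)) else i)"
definition tailc :: "nat \<Rightarrow> (nat \<Rightarrow> nat) \<Rightarrow> nat \<Rightarrow> nat" where
  "tailc m c = (\<lambda>i. if i \<in> {1..m} then c (Suc i) else 0)"

lemma shiftv_less[simp]: "shiftv v a < shiftv v b \<longleftrightarrow> a < b"
  by (auto simp: shiftv_def)
lemma shiftv_eq[simp]: "shiftv v a = shiftv v b \<longleftrightarrow> a = b"
  by (auto simp: shiftv_def)
lemma shiftv_less_v[simp]: "shiftv v a < v \<longleftrightarrow> a < v"
  by (auto simp: shiftv_def)
lemma shiftv_neq_v[simp]: "shiftv v a \<noteq> v"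
  by (auto simp: shiftv_def)
lemma shiftv_neq_v'[simp]: "v \<noteq> shiftv v a"
  by (auto simp: shiftv_def)

lemma CP_iff: "(p, c) \<in> colored_perms r n \<longleftrightarrow>
   p permutes {1..n} \<and> (\<forall>i\<in>{1..n}. c i < r) \<and> (\<forall>i. i \<notin> {1..n} \<longrightarrow> c i = 0)"
  by (simp add: colored_perms_def)

lemma perm_range: "p permutes {1..n} \<Longrightarrow> i \<in> {1..n} \<Longrightarrow> p i \<in> {1..n}"
  by (rule iffD2[OF permutes_in_image])

lemma perm_out: "p permutes {1..n} \<Longrightarrow> i \<notin> {1..n} \<Longrightarrow> p i = i"
  by (simp add: permutes_not_in)

lemma perm_inj: "p permutes S \<Longrightarrow> p i = p j \<longleftrightarrow> i = j"
  using permutes_inj[of p S] by (auto simp: inj_def)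

lemma cons_in:
  assumes "(p, c) \<in> colored_perms r m" "v \<in> {1..Suc m}" "col < r"
  shows "(consp m v p, consc m col c) \<in> colored_perms r (Suc m)"
proof -
  have p: "p permutes {1..m}" using assms(1) by (simp add: CP_iff)
  have "consp m v p permutes {1..Suc m}"
  proof (rule inj_imp_permutes)
    show "inj_on (consp m v p) {1..Suc m}"
    proof (rule inj_onI)
      fix x y assume x: "x \<in> {1..Suc m}" and y: "y \<in> {1..Suc m}" and e: "consp m v p x = consp m v p y"
      show "x = y"
      proof (cases "x = 1")
        case True
        then show ?thesis using e y by (auto simp: consp_def split: if_splits)
      next
        case False
        then show ?thesis using e x y perm_inj[OF p, of "x - 1" "y - 1"]
          by (auto simp: consp_def split: if_splits)
      qed
    qed
    show "finite {1..Suc m}" by simp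
    show "consp m v p x \<in> {1..Suc m}" if "x \<in> {1..Suc m}" for x
    proof (cases "x = 1")
      case True then show ?thesis using assms(2) by (simp add: consp_def)
    next
      case False
      then have "x - 1 \<in> {1..m}" using that by auto
      then have "p (x - 1) \<in> {1..m}" using perm_range[OF p] by blast
      then show ?thesis using False that by (auto simp: consp_def shiftv_def)
    qed
    show "consp m v p x = x" if "x \<notin> {1..Suc m}" for x
      using that by (auto simp: consp_def)
  qed
  then show ?thesis using assms by (auto simp: CP_iff consc_def)
qed

lemma tail_in:
  assumes "(p, c) \<in> colored_perms r (Suc m)"
  shows "(tailp m p, tailc m c) \<in> colored_perms r m"
proof -
  have p: "p permutes {1..Suc m}" using assms by (simp add: CP_iff)
  have p1: "p 1 \<in> {1..Suc m}" using perm_range[OF p] by simp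
  have "tailp m p permutes {1..m}"
  proof (rule inj_imp_permutes)
    show "inj_on (tailp m p) {1..m}"
    proof (rule inj_onI)
      fix x y assume x: "x \<in> {1..m}" and y: "y \<in> {1..m}" and e: "tailp m p x = tailp m p y"
      have nx: "p (Suc x) \<noteq> p 1" and ny: "p (Suc y) \<noteq> p 1" using perm_inj[OF p] x y by auto
      have "p (Suc x) = p (Suc y)"
        using e x y nx ny by (auto simp: tailp_def unshift_def split: if_splits)
      then show "x = y" using perm_inj[OF p, of "Suc x" "Suc y"] by simp
    qed
    show "finite {1..m}" by simp
    show "tailp m p x \<in> {1..m}" if "x \<in> {1..m}" for x
    proof -
      have "p (Suc x) \<in> {1..Suc m}" using perm_range[OF p] that by auto
      moreover have "p (Suc x) \<noteq> p 1" using perm_inj[OF p] that by auto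
      ultimately show ?thesis using that p1 by (auto simp: tailp_def unshift_def)
    qed
    show "tailp m p x = x" if "x \<notin> {1..m}" for x
      using that by (auto simp: tailp_def)
  qed
  then show ?thesis using assms by (auto simp: CP_iff tailc_def)
qed

lemma tail_cons:
  assumes "(p, c) \<in> colored_perms r m" "v \<in> {1..Suc m}"
  shows "tailp m (consp m v p) = p" "tailc m (consc m col c) = c"
proof -
  have pp: "p permutes {1..m}" using assms(1) by (simp add: CP_iff)
  show "tailp m (consp m v p) = p"
  proof
    fix i show "tailp m (consp m v p) i = p i"
      using perm_out[OF pp, of i] by (auto simp: tailp_def consp_def unshift_def shiftv_def)
  qed
  show "tailc m (consc m col c) = c"
  proof
    fix i show "tailc m (consc m col c) i = c i"
      using assms(1) by (auto simp: tailc_def consc_def CP_iff)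
  qed
qed

lemma cons_tail:
  assumes "(p, c) \<in> colored_perms r (Suc m)"
  shows "consp m (p 1) (tailp m p) = p" "consc m (c 1) (tailc m c) = c"
proof -
  have pp: "p permutes {1..Suc m}" using assms(1) by (simp add: CP_iff)
  show "consp m (p 1) (tailp m p) = p"
  proof
    fix i
    show "consp m (p 1) (tailp m p) i = p i"
    proof (cases "i \<in> {2..Suc m}")
      case True
      then have "p i \<noteq> p 1" using perm_inj[OF pp] by auto
      then show ?thesis using True by (auto simp: tailp_def consp_def unshift_def shiftv_def)
    next
      case False
      then show ?thesis using perm_out[OF pp, of i] by (auto simp: consp_def)
    qed
  qed
  show "consc m (c 1) (tailc m c) = c"
  proof
    fix i show "consc m (c 1) (tailc m c) i = c i"
      using assms(1) by (auto simp: tailc_def consc_def CP_iff)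
  qed
qed

lemma first_min:
  fixes p :: "nat \<Rightarrow> nat" and n :: nat
  assumes "p permutes {1..n}" "1 \<le> n"
  shows "(\<forall>k\<in>{1<..n}. p 1 < p k) \<longleftrightarrow> p 1 = 1"
proof
  assume H: "\<forall>k\<in>{1<..n}. p 1 < p k"
  have "1 \<in> p ` {1..n}" using permutes_image[OF assms(1)] assms(2) by simp
  then obtain k where k0: "1 = p k" "k \<in> {1..n}" by (rule imageE)
  then have k: "k \<in> {1..n}" "p k = 1" by simp_all
  show "p 1 = 1"
  proof (cases "k = 1")
    case True then show ?thesis using k by simp
  next
    case False then have "k \<in> {1<..n}" using k by auto
    then have "p 1 < p k" using H by blast
    then have "p 1 < 1" using k by simp
    moreover have "p 1 \<in> {1..n}" using perm_range[OF assms(1), of 1] assms(2) by simp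
    ultimately show ?thesis by simp
  qed
next
  assume H: "p 1 = 1"
  show "\<forall>k\<in>{1<..n}. p 1 < p k"
  proof
    fix k assume k: "k \<in> {1<..n}"
    then have "p k \<in> {1..n}" using perm_range[OF assms(1)] by auto
    moreover have "p k \<noteq> p 1" using perm_inj[OF assms(1)] k by auto
    ultimately show "p 1 < p k" using H by auto
  qed
qed


definition code :: "nat \<Rightarrow> (nat \<Rightarrow> nat) \<times> (nat \<Rightarrow> nat) \<Rightarrow> nat" where
  "code m \<sigma> = snd \<sigma> 1 * m + (fst \<sigma> 1 - 1)"
definition badpos :: "nat \<Rightarrow> (nat \<Rightarrow> nat) \<Rightarrow> (nat \<Rightarrow> nat) \<Rightarrow> nat \<Rightarrow> bool" where
  "badpos N p c j = ((\<forall>k\<in>{j<..N}. p j < p k) \<and> (\<forall>k\<in>{j..N}. p (j - 1) < p k) \<and> c j = c (j - 1))"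
definition nb2 :: "nat \<Rightarrow> (nat \<Rightarrow> nat) \<times> (nat \<Rightarrow> nat) \<Rightarrow> bool" where
  "nb2 N \<sigma> = (\<forall>j\<in>{2..N}. \<not> badpos N (fst \<sigma>) (snd \<sigma>) j)"
definition dsc :: "(nat \<Rightarrow> nat) \<Rightarrow> (nat \<Rightarrow> nat) \<Rightarrow> nat \<Rightarrow> bool" where
  "dsc p c i = (c (Suc i) < c i \<or> (c i = c (Suc i) \<and> p (Suc i) < p i))"

lemma cdes_eq: "cdes n (p, c) = card {i\<in>{1..n}. dsc p c i}"
  by (simp add: cdes_def dsc_def)

lemma card_split: "card {i\<in>{1..Suc m}. Q i} = (if Q 1 then 1 else 0) + card {i\<in>{1..m}. Q (Suc i)}"
proof -
  have e: "{i\<in>{1..Suc m}. Q i} = {i\<in>{1}. Q i} \<union> Suc ` {i\<in>{1..m}. Q (Suc i)}"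
  proof (rule set_eqI)
    fix x show "x \<in> {i\<in>{1..Suc m}. Q i} \<longleftrightarrow> x \<in> {i\<in>{1}. Q i} \<union> Suc ` {i\<in>{1..m}. Q (Suc i)}"
    proof (cases x)
      case 0 then show ?thesis by auto
    next
      case (Suc y) then show ?thesis by (cases y) auto
    qed
  qed
  have d: "{i\<in>{1}. Q i} \<inter> Suc ` {i\<in>{1..m}. Q (Suc i)} = {}" by auto
  have "card {i\<in>{1..Suc m}. Q i} = card {i\<in>{1}. Q i} + card (Suc ` {i\<in>{1..m}. Q (Suc i)})"
    unfolding e by (rule card_Un_disjoint) (use d in auto)
  also have "card (Suc ` {i\<in>{1..m}. Q (Suc i)}) = card {i\<in>{1..m}. Q (Suc i)}"
    by (rule card_image) simp
  also have "card {i\<in>{1}. Q i} = (if Q 1 then 1 else 0)"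
  proof -
    have "{i\<in>{1}. Q i} = (if Q 1 then {1} else {})" by auto
    then show ?thesis by simp
  qed
  finally show ?thesis .
qed

lemma consp_simps:
  "consp m v p 1 = v" "k \<in> {1..m} \<Longrightarrow> consp m v p (Suc k) = shiftv v (p k)"
  "consc m col c 1 = col" "k \<in> {1..m} \<Longrightarrow> consc m col c (Suc k) = c k"
  by (auto simp: consp_def consc_def)

lemma des_cons:
  assumes "(p, c) \<in> colored_perms r m" "1 \<le> m" "v \<in> {1..Suc m}"
  shows "cdes (Suc m) (consp m v p, consc m col c) =
     (if c 1 < col \<or> (col = c 1 \<and> p 1 < v) then 1 else 0) + cdes m (p, c)"
proof -
  have pp: "p permutes {1..m}" and cr: "\<forall>i. i \<notin> {1..m} \<longrightarrow> c i = 0"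
    using assms(1) by (auto simp: CP_iff)
  let ?P = "consp m v p" and ?C = "consc m col c"
  have d1: "dsc ?P ?C 1 \<longleftrightarrow> c 1 < col \<or> (col = c 1 \<and> p 1 < v)"
    using assms(2) by (auto simp: dsc_def consp_def consc_def)
  have d2: "{i\<in>{1..m}. dsc ?P ?C (Suc i)} = {i\<in>{1..m}. dsc p c i}"
  proof (rule Collect_cong, rule conj_cong[OF refl])
    fix i assume i: "i \<in> {1..m}"
    show "dsc ?P ?C (Suc i) \<longleftrightarrow> dsc p c i"
    proof (cases "i < m")
      case True
      then have "Suc i \<in> {1..m}" using i by auto
      then show ?thesis using i by (simp add: dsc_def consp_simps)
    next
      case False
      then have im: "i = m" using i by auto
      have a1: "c (Suc m) = 0" using cr by simp
      have a2: "p (Suc m) = Suc m" using perm_out[OF pp] by simp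
      have a3: "p m \<le> m" using perm_range[OF pp, of m] assms(2) by simp
      have a4: "?P (Suc (Suc m)) = Suc (Suc m)" "?C (Suc (Suc m)) = 0"
        by (auto simp: consp_def consc_def)
      have a5: "?P (Suc m) \<le> Suc m" using a3 assms(2) by (simp add: consp_simps shiftv_def)
      show ?thesis unfolding im dsc_def using a1 a2 a3 a4 a5 assms(2) by (simp add: consp_simps)
    qed
  qed
  show ?thesis unfolding cdes_eq card_split d1 d2 by simp
qed

lemma forall_Suc_gt: "(\<forall>k\<in>{Suc a<..Suc m}. Q k) \<longleftrightarrow> (\<forall>k\<in>{a<..m}. Q (Suc k))"
proof
  assume H: "\<forall>k\<in>{Suc a<..Suc m}. Q k"
  show "\<forall>k\<in>{a<..m}. Q (Suc k)"
  proof
    fix k assume "k \<in> {a<..m}" then have "Suc k \<in> {Suc a<..Suc m}" by simp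
    then show "Q (Suc k)" using H by blast
  qed
next
  assume H: "\<forall>k\<in>{a<..m}. Q (Suc k)"
  show "\<forall>k\<in>{Suc a<..Suc m}. Q k"
  proof
    fix k assume k: "k \<in> {Suc a<..Suc m}"
    then obtain k' where "k = Suc k'" by (cases k) auto
    then show "Q k" using H k by auto
  qed
qed

lemma forall_Suc_ge: "(\<forall>k\<in>{Suc a..Suc m}. Q k) \<longleftrightarrow> (\<forall>k\<in>{a..m}. Q (Suc k))"
proof
  assume H: "\<forall>k\<in>{Suc a..Suc m}. Q k"
  show "\<forall>k\<in>{a..m}. Q (Suc k)"
  proof
    fix k assume "k \<in> {a..m}" then have "Suc k \<in> {Suc a..Suc m}" by simp
    then show "Q (Suc k)" using H by blast
  qed
next
  assume H: "\<forall>k\<in>{a..m}. Q (Suc k)"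
  show "\<forall>k\<in>{Suc a..Suc m}. Q k"
  proof
    fix k assume k: "k \<in> {Suc a..Suc m}"
    then obtain k' where "k = Suc k'" by (cases k) auto
    then show "Q k" using H k by auto
  qed
qed


lemma forall_split1: "1 \<le> (n::nat) \<Longrightarrow> (\<forall>j\<in>{1..n}. Q j) \<longleftrightarrow> Q 1 \<and> (\<forall>j\<in>{2..n}. Q j)"
proof -
  assume n: "1 \<le> n"
  have "{1..n} = insert 1 {2..n}" using n by auto
  then show ?thesis by simp
qed

lemma forall_split2: "1 \<le> (m::nat) \<Longrightarrow> (\<forall>j\<in>{2..Suc m}. Q j) \<longleftrightarrow> Q 2 \<and> (\<forall>j\<in>{2..m}. Q (Suc j))"
proof -
  assume m: "1 \<le> m"
  have "(\<forall>j\<in>{2..Suc m}. Q j) \<longleftrightarrow> (\<forall>j\<in>{Suc 1..Suc m}. Q j)" by (simp add: numeral_2_eq_2)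
  also have "\<dots> \<longleftrightarrow> (\<forall>j\<in>{1..m}. Q (Suc j))" by (rule forall_Suc_ge)
  also have "\<dots> \<longleftrightarrow> Q (Suc 1) \<and> (\<forall>j\<in>{2..m}. Q (Suc j))" by (rule forall_split1[OF m])
  finally show ?thesis by (simp add: numeral_2_eq_2)
qed

lemma badpos_cons2:
  assumes "(p, c) \<in> colored_perms r m" "1 \<le> m" "v \<in> {1..Suc m}" "col < r"
  shows "badpos (Suc m) (consp m v p) (consc m col c) 2 \<longleftrightarrow> v = 1 \<and> p 1 = 1 \<and> col = c 1"
proof -
  let ?P = "consp m v p" and ?C = "consc m col c"
  have pp: "p permutes {1..m}" using assms(1) by (simp add: CP_iff)
  have big: "?P permutes {1..Suc m}" using cons_in[OF assms(1,3,4)] by (simp add: CP_iff)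
  have P2: "?P 2 = shiftv v (p 1)" "?C 2 = c 1"
    using consp_simps(2)[of 1 m v p] consp_simps(4)[of 1 m col c] assms(2) by (simp_all add: numeral_2_eq_2)
  have "(\<forall>k\<in>{2<..Suc m}. ?P 2 < ?P k) \<longleftrightarrow> (\<forall>k\<in>{Suc 1<..Suc m}. ?P 2 < ?P k)"
    by (simp add: numeral_2_eq_2)
  also have "\<dots> \<longleftrightarrow> (\<forall>k\<in>{1<..m}. ?P 2 < ?P (Suc k))" by (rule forall_Suc_gt)
  also have "\<dots> \<longleftrightarrow> (\<forall>k\<in>{1<..m}. p 1 < p k)"
    using P2 consp_simps(2)[of _ m v p] by auto
  also have "\<dots> \<longleftrightarrow> p 1 = 1" using first_min[OF pp assms(2)] .
  finally have A: "(\<forall>k\<in>{2<..Suc m}. ?P 2 < ?P k) \<longleftrightarrow> p 1 = 1" .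
  have "(\<forall>k\<in>{2..Suc m}. ?P 1 < ?P k) \<longleftrightarrow> (\<forall>k\<in>{1<..Suc m}. ?P 1 < ?P k)"
    by (auto simp: numeral_2_eq_2 Suc_le_eq)
  also have "\<dots> \<longleftrightarrow> ?P 1 = 1" using first_min[OF big] by simp
  finally have B0: "(\<forall>k\<in>{2..Suc m}. ?P 1 < ?P k) \<longleftrightarrow> ?P 1 = 1" .
  have P1: "?P 1 = v" by (simp add: consp_def)
  have B: "(\<forall>k\<in>{2..Suc m}. ?P 1 < ?P k) \<longleftrightarrow> v = 1" using B0 unfolding P1 .
  have C1: "?C 1 = col" by (simp add: consc_def)
  show ?thesis unfolding badpos_def using A B P2 C1 by auto
qed

lemma badpos_consS:
  assumes "(p, c) \<in> colored_perms r m" "j \<in> {2..m}"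
  shows "badpos (Suc m) (consp m v p) (consc m col c) (Suc j) \<longleftrightarrow> badpos m p c j"
proof -
  let ?P = "consp m v p" and ?C = "consc m col c"
  have j1: "j \<in> {1..m}" "j - 1 \<in> {1..m}" "Suc (j - 1) = j" using assms(2) by auto
  have "(\<forall>k\<in>{Suc j<..Suc m}. ?P (Suc j) < ?P k) \<longleftrightarrow> (\<forall>k\<in>{j<..m}. ?P (Suc j) < ?P (Suc k))"
    by (rule forall_Suc_gt)
  also have "\<dots> \<longleftrightarrow> (\<forall>k\<in>{j<..m}. p j < p k)"
    using j1 consp_simps(2)[of _ m v p] by auto
  finally have A: "(\<forall>k\<in>{Suc j<..Suc m}. ?P (Suc j) < ?P k) \<longleftrightarrow> (\<forall>k\<in>{j<..m}. p j < p k)" .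
  have "(\<forall>k\<in>{Suc j..Suc m}. ?P j < ?P k) \<longleftrightarrow> (\<forall>k\<in>{j..m}. ?P j < ?P (Suc k))"
    by (rule forall_Suc_ge)
  also have "\<dots> \<longleftrightarrow> (\<forall>k\<in>{j..m}. p (j - 1) < p k)"
  proof -
    have e1: "?P j = shiftv v (p (j - 1))" using consp_simps(2)[of "j - 1" m v p] j1 by simp
    have "(\<forall>k\<in>{j..m}. ?P j < ?P (Suc k)) \<longleftrightarrow> (\<forall>k\<in>{j..m}. shiftv v (p (j - 1)) < shiftv v (p k))"
    proof (rule ball_cong[OF refl])
      fix k assume "k \<in> {j..m}"
      then have "k \<in> {1..m}" using assms(2) by auto
      then show "(?P j < ?P (Suc k)) = (shiftv v (p (j - 1)) < shiftv v (p k))"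
        using e1 consp_simps(2)[of k m v p] by simp
    qed
    then show ?thesis by simp
  qed
  finally have B: "(\<forall>k\<in>{Suc j..Suc m}. ?P j < ?P k) \<longleftrightarrow> (\<forall>k\<in>{j..m}. p (j - 1) < p k)" .
  have C: "?C (Suc j) = c j" "?C j = c (j - 1)"
    using consp_simps(4)[of j m col c] consp_simps(4)[of "j - 1" m col c] j1 by simp_all
  show ?thesis unfolding badpos_def using A B C by simp
qed

lemma nb2_cons:
  assumes "(p, c) \<in> colored_perms r m" "1 \<le> m" "v \<in> {1..Suc m}" "col < r"
  shows "nb2 (Suc m) (consp m v p, consc m col c) \<longleftrightarrow> nb2 m (p, c) \<and> \<not> (v = 1 \<and> p 1 = 1 \<and> col = c 1)"
  unfolding nb2_def fst_conv snd_conv forall_split2[OF assms(2)]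
  using badpos_cons2[OF assms] badpos_consS[OF assms(1)] by auto

lemma code_props:
  assumes "(p, c) \<in> colored_perms r N" "1 \<le> N"
  shows "code N (p, c) < N * r" "code N (p, c) div N = c 1" "code N (p, c) mod N = p 1 - 1"
proof -
  have pp: "p permutes {1..N}" and c1: "c 1 < r" using assms by (auto simp: CP_iff)
  have p1: "p 1 \<in> {1..N}" using perm_range[OF pp] assms(2) by simp
  then have x: "p 1 - 1 < N" by auto
  have "code N (p, c) < c 1 * N + N" using x by (simp add: code_def)
  also have "\<dots> = (c 1 + 1) * N" by simp
  also have "\<dots> \<le> r * N" using c1 by (intro mult_le_mono1) simp
  finally show "code N (p, c) < N * r" by (simp add: mult.commute)
  show "code N (p, c) div N = c 1" using x by (simp add: code_def)
  show "code N (p, c) mod N = p 1 - 1" using x by (simp add: code_def)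
qed

lemma finite_CP: "finite (colored_perms r n)"
proof -
  have "colored_perms r n \<subseteq> {p. p permutes {1..n}} \<times>
     {c. \<forall>x. (x \<in> {1..n} \<longrightarrow> c x \<in> {..<r}) \<and> (x \<notin> {1..n} \<longrightarrow> c x = 0)}"
    by (auto simp: colored_perms_def)
  moreover have "finite ({p. p permutes {1..n}} \<times>
     {c. \<forall>x. (x \<in> {1..n} \<longrightarrow> c x \<in> {..<r}) \<and> (x \<notin> {1..n} \<longrightarrow> c x = (0::nat))})"
    by (intro finite_cartesian_product finite_permutations finite_set_of_finite_funs) auto
  ultimately show ?thesis by (rule finite_subset)
qed

definition RS :: "nat \<Rightarrow> real \<Rightarrow> nat \<Rightarrow> nat \<Rightarrow> real" where
  "RS r z m E = (\<Sum>\<sigma>\<in>{\<sigma>\<in>colored_perms r m. nb2 m \<sigma> \<and> code m \<sigma> = E}. z ^ cdes m \<sigma>)"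

lemma RS_base:
  assumes "E < r"
  shows "RS r z 1 E = Rr r z 0 E"
proof -
  define cE where "cE = (\<lambda>i::nat. if i = 1 then E else 0)"
  have S: "{\<sigma>\<in>colored_perms r 1. nb2 1 \<sigma> \<and> code 1 \<sigma> = E} = {(id, cE)}"
  proof (rule set_eqI)
    fix \<sigma> :: "(nat \<Rightarrow> nat) \<times> (nat \<Rightarrow> nat)"
    obtain p c where s: "\<sigma> = (p, c)" by (cases \<sigma>)
    show "\<sigma> \<in> {\<sigma>\<in>colored_perms r 1. nb2 1 \<sigma> \<and> code 1 \<sigma> = E} \<longleftrightarrow> \<sigma> \<in> {(id, cE)}"
    proof
      assume "\<sigma> \<in> {\<sigma>\<in>colored_perms r 1. nb2 1 \<sigma> \<and> code 1 \<sigma> = E}"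
      then have h: "p permutes {1}" "\<forall>i. i \<notin> {1} \<longrightarrow> c i = 0" "c 1 = E"
        by (auto simp: s CP_iff code_def)
      then have "p = id" by simp
      moreover have "c = cE" using h by (auto simp: cE_def)
      ultimately show "\<sigma> \<in> {(id, cE)}" by (simp add: s)
    next
      assume "\<sigma> \<in> {(id, cE)}"
      then show "\<sigma> \<in> {\<sigma>\<in>colored_perms r 1. nb2 1 \<sigma> \<and> code 1 \<sigma> = E}"
        using assms by (auto simp: s CP_iff code_def cE_def nb2_def)
    qed
  qed
  have "cdes 1 (id, cE) = (if 0 < E then 1 else 0)"
    unfolding cdes_eq by (auto simp: dsc_def cE_def)
  then show ?thesis using assms unfolding RS_def S by simp
qed


lemma RS_step:
  assumes IH: "\<And>E'. E' < Suc n * r \<Longrightarrow> RS r z (Suc n) E' = Rr r z n E'"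
    and E: "E < Suc (Suc n) * r"
  shows "RS r z (Suc (Suc n)) E = Rr r z (Suc n) E"
proof -
  define m where "m = Suc n"
  have m1: "1 \<le> m" by (simp add: m_def)
  define col where "col = E div Suc m"
  define v where "v = Suc (E mod Suc m)"
  have colr: "col < r" using E unfolding col_def m_def by (simp add: less_mult_imp_div_less mult.commute)
  have vr: "v \<in> {1..Suc m}" unfolding v_def by (simp add: less_Suc_eq_le)
  have Edec: "E = col * Suc m + (v - 1)" unfolding col_def v_def using div_mult_mod_eq[of E "Suc m"] by simp
  define S' where "S' = {\<sigma>'\<in>colored_perms r m. nb2 m \<sigma>' \<and> \<not> (v = 1 \<and> fst \<sigma>' 1 = 1 \<and> col = snd \<sigma>' 1)}"
  define cons where "cons = (\<lambda>\<sigma>'::(nat \<Rightarrow> nat) \<times> (nat \<Rightarrow> nat). (consp m v (fst \<sigma>'), consc m col (snd \<sigma>')))"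
  have img: "{\<sigma>\<in>colored_perms r (Suc m). nb2 (Suc m) \<sigma> \<and> code (Suc m) \<sigma> = E} = cons ` S'"
  proof (rule set_eqI)
    fix \<sigma> :: "(nat \<Rightarrow> nat) \<times> (nat \<Rightarrow> nat)"
    obtain p c where s: "\<sigma> = (p, c)" by (cases \<sigma>)
    show "\<sigma> \<in> {\<sigma>\<in>colored_perms r (Suc m). nb2 (Suc m) \<sigma> \<and> code (Suc m) \<sigma> = E} \<longleftrightarrow> \<sigma> \<in> cons ` S'"
    proof
      assume "\<sigma> \<in> {\<sigma>\<in>colored_perms r (Suc m). nb2 (Suc m) \<sigma> \<and> code (Suc m) \<sigma> = E}"
      then have h: "(p, c) \<in> colored_perms r (Suc m)" "nb2 (Suc m) (p, c)" "code (Suc m) (p, c) = E"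
        by (auto simp: s)
      have cp: "c 1 = col" "p 1 - 1 = v - 1" using code_props(2,3)[OF h(1)] h(3) unfolding col_def v_def by auto
      have "p 1 \<in> {1..Suc m}" using h(1) perm_range[of p "Suc m" 1] by (auto simp: CP_iff)
      then have p1: "p 1 = v" using cp(2) vr by auto
      have t: "(tailp m p, tailc m c) \<in> colored_perms r m" by (rule tail_in[OF h(1)])
      have ct: "consp m v (tailp m p) = p" "consc m col (tailc m c) = c"
        using cons_tail[OF h(1)] p1 cp(1) by auto
      have "nb2 (Suc m) (consp m v (tailp m p), consc m col (tailc m c))" using h(2) ct by simp
      then have "nb2 m (tailp m p, tailc m c) \<and> \<not> (v = 1 \<and> tailp m p 1 = 1 \<and> col = tailc m c 1)"
        using nb2_cons[OF t m1 vr colr] by simp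
      then have "(tailp m p, tailc m c) \<in> S'" using t unfolding S'_def by simp
      moreover have "\<sigma> = cons (tailp m p, tailc m c)" using ct by (simp add: cons_def s)
      ultimately show "\<sigma> \<in> cons ` S'" by blast
    next
      assume "\<sigma> \<in> cons ` S'"
      then obtain p' c' where h: "(p', c') \<in> S'" "\<sigma> = cons (p', c')" by auto
      have cp: "(p', c') \<in> colored_perms r m" using h(1) by (simp add: S'_def)
      have "(consp m v p', consc m col c') \<in> colored_perms r (Suc m)" by (rule cons_in[OF cp vr colr])
      moreover have "nb2 (Suc m) (consp m v p', consc m col c')"
        using nb2_cons[OF cp m1 vr colr] h(1) by (simp add: S'_def)
      moreover have "code (Suc m) (consp m v p', consc m col c') = E"
        using Edec by (simp add: code_def consp_def consc_def)
      ultimately show "\<sigma> \<in> {\<sigma>\<in>colored_perms r (Suc m). nb2 (Suc m) \<sigma> \<and> code (Suc m) \<sigma> = E}"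
        using h(2) by (simp add: cons_def)
    qed
  qed
  have inj: "inj_on cons S'"
  proof (rule inj_onI)
    fix x y assume x: "x \<in> S'" and y: "y \<in> S'" and e: "cons x = cons y"
    obtain p c where xs: "x = (p, c)" by (cases x)
    obtain p' c' where ys: "y = (p', c')" by (cases y)
    have cx: "(p, c) \<in> colored_perms r m" and cy: "(p', c') \<in> colored_perms r m"
      using x y xs ys by (auto simp: S'_def)
    have "tailp m (consp m v p) = tailp m (consp m v p')" "tailc m (consc m col c) = tailc m (consc m col c')"
      using e xs ys by (auto simp: cons_def)
    then show "x = y" using tail_cons[OF cx vr] tail_cons[OF cy vr] xs ys by simp
  qed
  define h where "h = (\<lambda>\<sigma>'::(nat \<Rightarrow> nat) \<times> (nat \<Rightarrow> nat).
     (if snd \<sigma>' 1 < col \<or> (col = snd \<sigma>' 1 \<and> fst \<sigma>' 1 < v) then z else 1) * z ^ cdes m \<sigma>')"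
  have "RS r z (Suc m) E = (\<Sum>\<sigma>\<in>cons ` S'. z ^ cdes (Suc m) \<sigma>)" unfolding RS_def img ..
  also have "\<dots> = (\<Sum>\<sigma>'\<in>S'. z ^ cdes (Suc m) (cons \<sigma>'))" by (rule sum.reindex[OF inj, unfolded comp_def])
  also have "\<dots> = (\<Sum>\<sigma>'\<in>S'. h \<sigma>')"
  proof (rule sum.cong[OF refl])
    fix \<sigma>' assume "\<sigma>' \<in> S'"
    then obtain p c where s: "\<sigma>' = (p, c)" "(p, c) \<in> colored_perms r m" by (cases \<sigma>') (auto simp: S'_def)
    show "z ^ cdes (Suc m) (cons \<sigma>') = h \<sigma>'"
      unfolding h_def cons_def s fst_conv snd_conv des_cons[OF s(2) m1 vr] by (simp add: power_add)
  qed
  also have "\<dots> = (\<Sum>E'\<in>{..<m * r}. \<Sum>\<sigma>'\<in>{\<sigma>'\<in>S'. code m \<sigma>' = E'}. h \<sigma>')"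
  proof (rule sum.group[symmetric])
    show "finite S'" unfolding S'_def using finite_CP by simp
    show "finite {..<m * r}" by simp
    show "code m ` S' \<subseteq> {..<m * r}"
    proof
      fix x assume "x \<in> code m ` S'"
      then obtain p c where "(p, c) \<in> S'" "x = code m (p, c)" by auto
      then show "x \<in> {..<m * r}" using code_props(1)[of p c r m] m1 by (auto simp: S'_def)
    qed
  qed
  also have "\<dots> = (\<Sum>E'<m * r. (if E * m = E' * Suc m then 0
      else if E' * Suc m < E * m then z else 1) * RS r z m E')"
  proof (rule sum.cong[OF refl])
    fix E' assume "E' \<in> {..<m * r}"
    define c' where "c' = E' div m"
    define p' where "p' = Suc (E' mod m)"
    have E'dec: "E' = c' * m + (p' - 1)" unfolding c'_def p'_def using div_mult_mod_eq[of E' m] by simp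
    have bm: "p' - 1 < m" unfolding p'_def using m1 by simp
    have am: "v - 1 \<le> m" using vr by auto
    have k1: "E * m = E' * (m + 1) \<longleftrightarrow> col = c' \<and> v - 1 = 0 \<and> p' - 1 = 0"
      using arith_key(1)[OF am bm, of col c'] unfolding Edec E'dec by simp
    have k2: "E' * (m + 1) < E * m \<longleftrightarrow> c' < col \<or> (c' = col \<and> p' - 1 < v - 1)"
      using arith_key(2)[OF am bm, of c' col] unfolding Edec E'dec by simp
    have sub: "\<And>p c. (p, c) \<in> colored_perms r m \<Longrightarrow> code m (p, c) = E' \<Longrightarrow> c 1 = c' \<and> p 1 = p'"
    proof -
      fix p c assume pc: "(p, c) \<in> colored_perms r m" and cd: "code m (p, c) = E'"
      have "p 1 \<in> {1..m}" using pc perm_range[of p m 1] m1 by (auto simp: CP_iff)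
      then show "c 1 = c' \<and> p 1 = p'" using code_props(2,3)[OF pc m1] cd unfolding c'_def p'_def by auto
    qed
    show "(\<Sum>\<sigma>'\<in>{\<sigma>'\<in>S'. code m \<sigma>' = E'}. h \<sigma>') = (if E * m = E' * Suc m then 0
      else if E' * Suc m < E * m then z else 1) * RS r z m E'"
    proof (cases "v = 1 \<and> p' = 1 \<and> col = c'")
      case True
      have emp: "{\<sigma>'\<in>S'. code m \<sigma>' = E'} = {}"
      proof -
        { fix p c assume "(p, c) \<in> S'" "code m (p, c) = E'"
          then have False using sub[of p c] True by (auto simp: S'_def) }
        then show ?thesis by auto
      qed
      moreover have "E * m = E' * Suc m" using k1 True by simp
      ultimately show ?thesis by (simp only: emp sum.empty) simp
    next
      case False
      have eqS: "{\<sigma>'\<in>S'. code m \<sigma>' = E'} = {\<sigma>\<in>colored_perms r m. nb2 m \<sigma> \<and> code m \<sigma> = E'}"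
      proof (rule set_eqI)
        fix \<sigma> :: "(nat \<Rightarrow> nat) \<times> (nat \<Rightarrow> nat)"
        obtain p c where s: "\<sigma> = (p, c)" by (cases \<sigma>)
        have "(p, c) \<in> colored_perms r m \<Longrightarrow> code m (p, c) = E' \<Longrightarrow> \<not> (v = 1 \<and> p 1 = 1 \<and> col = c 1)"
          using sub[of p c] False by auto
        then show "\<sigma> \<in> {\<sigma>'\<in>S'. code m \<sigma>' = E'} \<longleftrightarrow> \<sigma> \<in> {\<sigma>\<in>colored_perms r m. nb2 m \<sigma> \<and> code m \<sigma> = E'}"
          unfolding S'_def s by auto
      qed
      have p'1: "1 \<le> p'" unfolding p'_def by simp
      have ne: "E * m \<noteq> E' * Suc m" using k1 False vr p'1 by auto
      have hw: "\<And>\<sigma>'. \<sigma>' \<in> {\<sigma>\<in>colored_perms r m. nb2 m \<sigma> \<and> code m \<sigma> = E'} \<Longrightarrow>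
          h \<sigma>' = (if E' * Suc m < E * m then z else 1) * z ^ cdes m \<sigma>'"
      proof -
        fix \<sigma>' assume a: "\<sigma>' \<in> {\<sigma>\<in>colored_perms r m. nb2 m \<sigma> \<and> code m \<sigma> = E'}"
        obtain p c where s: "\<sigma>' = (p, c)" by (cases \<sigma>')
        have "c 1 = c' \<and> p 1 = p'" using sub[of p c] a s by auto
        moreover have "(c' < col \<or> (col = c' \<and> p' < v)) \<longleftrightarrow> (E' * Suc m < E * m)"
          using k2 vr unfolding p'_def by auto
        ultimately show "h \<sigma>' = (if E' * Suc m < E * m then z else 1) * z ^ cdes m \<sigma>'"
          unfolding h_def s by auto
      qed
      have "(\<Sum>\<sigma>'\<in>{\<sigma>\<in>colored_perms r m. nb2 m \<sigma> \<and> code m \<sigma> = E'}. h \<sigma>')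
          = (\<Sum>\<sigma>'\<in>{\<sigma>\<in>colored_perms r m. nb2 m \<sigma> \<and> code m \<sigma> = E'}. (if E' * Suc m < E * m then z else 1) * z ^ cdes m \<sigma>')"
        by (rule sum.cong[OF refl hw])
      also have "\<dots> = (if E' * Suc m < E * m then z else 1) * RS r z m E'"
        unfolding RS_def by (rule sum_distrib_left[symmetric])
      finally show ?thesis unfolding eqS using ne by simp
    qed
  qed
  also have "\<dots> = Rr r z (Suc n) E" using IH unfolding m_def by (simp add: Rr.simps)
  finally show ?thesis unfolding m_def .
qed


lemma RS_Rr: "E < Suc n * r \<Longrightarrow> RS r z (Suc n) E = Rr r z n E"
proof (induction n arbitrary: E)
  case 0
  then show ?case using RS_base by simp
next
  case (Suc n)
  show ?case by (rule RS_step[OF Suc.IH Suc.prems])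
qed

lemma bad_empty_iff:
  assumes "(p, c) \<in> colored_perms r n" "1 \<le> n"
  shows "bad_set n (p, c) = {} \<longleftrightarrow> nb2 n (p, c) \<and> code n (p, c) \<noteq> 0"
proof -
  have pp: "p permutes {1..n}" and c0: "c 0 = 0" using assms(1) by (auto simp: CP_iff)
  have p0: "p 0 = 0" using perm_out[OF pp, of 0] by simp
  have p1: "p 1 \<in> {1..n}" using perm_range[OF pp] assms(2) by simp
  have "bad_set n (p, c) = {} \<longleftrightarrow> (\<forall>j\<in>{1..n}. \<not> badpos n p c j)"
  proof
    assume H: "bad_set n (p, c) = {}"
    show "\<forall>j\<in>{1..n}. \<not> badpos n p c j"
    proof (intro ballI notI)
      fix j assume j: "j \<in> {1..n}" and b: "badpos n p c j"
      have "p j \<in> {1..n}" using perm_range[OF pp j] .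
      then have "p j \<in> bad_set n (p, c)" using j b unfolding bad_set_def badpos_def by auto
      then show False using H by simp
    qed
  next
    assume H: "\<forall>j\<in>{1..n}. \<not> badpos n p c j"
    show "bad_set n (p, c) = {}" using H unfolding bad_set_def badpos_def by auto
  qed
  also have "\<dots> \<longleftrightarrow> \<not> badpos n p c 1 \<and> nb2 n (p, c)"
    unfolding nb2_def fst_conv snd_conv using forall_split1[OF assms(2)] by simp
  also have "badpos n p c 1 \<longleftrightarrow> p 1 = 1 \<and> c 1 = 0"
  proof -
    have "(\<forall>k\<in>{1..n}. p 0 < p k)"
      using perm_range[OF pp] p0 by fastforce
    then show ?thesis unfolding badpos_def using first_min[OF pp assms(2)] c0 by simp
  qed
  also have "(p 1 = 1 \<and> c 1 = 0) \<longleftrightarrow> code n (p, c) = 0"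
  proof -
    have "code n (p, c) = 0 \<longleftrightarrow> c 1 * n = 0 \<and> p 1 - 1 = 0" by (simp add: code_def)
    also have "\<dots> \<longleftrightarrow> c 1 = 0 \<and> p 1 = 1" using p1 assms(2) by auto
    finally show ?thesis by blast
  qed
  finally show ?thesis by blast
qed

lemma RHS_total:
  assumes "0 < n"
  shows "(\<Sum>\<sigma>\<in>{\<sigma>\<in>colored_perms r n. bad_set n \<sigma> = {}}. z ^ cdes n \<sigma>)
     = (\<Sum>E\<in>{..<n * r} - {0}. Rr r z (n - 1) E)"
proof -
  have n1: "1 \<le> n" using assms by simp
  have S: "{\<sigma>\<in>colored_perms r n. bad_set n \<sigma> = {}} = {\<sigma>\<in>colored_perms r n. nb2 n \<sigma> \<and> code n \<sigma> \<noteq> 0}"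
    using bad_empty_iff[OF _ n1] by auto
  have "(\<Sum>\<sigma>\<in>{\<sigma>\<in>colored_perms r n. nb2 n \<sigma> \<and> code n \<sigma> \<noteq> 0}. z ^ cdes n \<sigma>)
     = (\<Sum>E\<in>{..<n * r} - {0}. \<Sum>\<sigma>\<in>{\<sigma>'\<in>{\<sigma>\<in>colored_perms r n. nb2 n \<sigma> \<and> code n \<sigma> \<noteq> 0}. code n \<sigma>' = E}. z ^ cdes n \<sigma>)"
  proof (rule sum.group[symmetric])
    show "finite {\<sigma>\<in>colored_perms r n. nb2 n \<sigma> \<and> code n \<sigma> \<noteq> 0}" using finite_CP by simp
    show "finite ({..<n * r} - {0})" by simp
    show "code n ` {\<sigma>\<in>colored_perms r n. nb2 n \<sigma> \<and> code n \<sigma> \<noteq> 0} \<subseteq> {..<n * r} - {0}"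
      using code_props(1)[OF _ n1] by force
  qed
  also have "\<dots> = (\<Sum>E\<in>{..<n * r} - {0}. RS r z n E)"
  proof (rule sum.cong[OF refl])
    fix E assume "E \<in> {..<n * r} - {0}"
    then have "{\<sigma>'\<in>{\<sigma>\<in>colored_perms r n. nb2 n \<sigma> \<and> code n \<sigma> \<noteq> 0}. code n \<sigma>' = E}
       = {\<sigma>\<in>colored_perms r n. nb2 n \<sigma> \<and> code n \<sigma> = E}" by auto
    then show "(\<Sum>\<sigma>\<in>{\<sigma>'\<in>{\<sigma>\<in>colored_perms r n. nb2 n \<sigma> \<and> code n \<sigma> \<noteq> 0}. code n \<sigma>' = E}. z ^ cdes n \<sigma>) = RS r z n E"
      unfolding RS_def by simp
  qed
  also have "\<dots> = (\<Sum>E\<in>{..<n * r} - {0}. Rr r z (n - 1) E)"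
  proof (rule sum.cong[OF refl])
    fix E assume "E \<in> {..<n * r} - {0}"
    then have "E < Suc (n - 1) * r" using assms by simp
    then show "RS r z n E = Rr r z (n - 1) E" using RS_Rr[of E "n - 1" r z] assms by simp
  qed
  finally show ?thesis unfolding S .
qed

definition yv :: "nat \<Rightarrow> (nat \<Rightarrow> nat) \<Rightarrow> (nat \<Rightarrow> real) \<Rightarrow> nat \<Rightarrow> real" where
  "yv m t x j = (if j = 0 then 0 else if j = m + 1 then 1 else x j / real (t j))"

definition vv :: "nat \<Rightarrow> (nat \<Rightarrow> nat) \<Rightarrow> nat \<Rightarrow> nat \<Rightarrow> real" where
  "vv m t k = (\<lambda>j. if k < j \<and> j \<le> m then real (t j) else 0)"

lemma Pset_iff: "x \<in> Pset m t \<longleftrightarrow> (\<forall>j. j \<notin> {1..m} \<longrightarrow> x j = 0) \<and> (\<forall>j\<le>m. yv m t x j \<le> yv m t x (Suc j))"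
  by (simp add: Pset_def yv_def Let_def)

lemma chain_mono:
  fixes y :: "nat \<Rightarrow> real"
  assumes "\<forall>j\<le>m. y j \<le> y (Suc j)" "i \<le> j" "j \<le> Suc m"
  shows "y i \<le> y j"
  using assms(2,3)
proof (induction j)
  case 0 then show ?case by simp
next
  case (Suc j)
  show ?case
  proof (cases "i = Suc j")
    case True then show ?thesis by simp
  next
    case False
    then have "i \<le> j" using Suc.prems by simp
    then have "y i \<le> y j" using Suc.IH Suc.prems by simp
    also have "y j \<le> y (Suc j)" using assms(1) Suc.prems by simp
    finally show ?thesis .
  qed
qed

lemma y_bounds:
  assumes "x \<in> Pset m t" "j \<le> Suc m"
  shows "0 \<le> yv m t x j" "yv m t x j \<le> 1"
proof -
  have c: "\<forall>j\<le>m. yv m t x j \<le> yv m t x (Suc j)" using assms(1) by (simp add: Pset_iff)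
  show "0 \<le> yv m t x j" using chain_mono[OF c, of 0 j] assms(2) by (simp add: yv_def)
  show "yv m t x j \<le> 1" using chain_mono[OF c, of j "Suc m"] assms(2) by (simp add: yv_def)
qed

lemma x_bounds:
  assumes "x \<in> Pset m t" "j \<in> {1..m}" "0 < t j"
  shows "0 \<le> x j" "x j \<le> real (t j)"
proof -
  have y: "yv m t x j = x j / real (t j)" using assms(2) by (simp add: yv_def)
  have "j \<le> Suc m" using assms(2) by simp
  from y_bounds[OF assms(1) this] y have a: "0 \<le> x j / real (t j)" "x j / real (t j) \<le> 1" by simp_all
  show "0 \<le> x j" using a(1) assms(3) by (simp add: zero_le_divide_iff)
  show "x j \<le> real (t j)" using a(2) assms(3) by (simp add: divide_le_eq_1)
qed

lemma vv_in:
  assumes "k \<le> m" and tpos: "\<forall>j\<in>{1..m}. 0 < t j"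
  shows "vv m t k \<in> Pset m t"
  unfolding Pset_iff
proof (intro conjI allI impI)
  fix j assume "j \<notin> {1..m}" then show "vv m t k j = 0" by (auto simp: vv_def)
next
  fix j assume j: "j \<le> m"
  show "yv m t (vv m t k) j \<le> yv m t (vv m t k) (Suc j)"
  proof -
    consider "j = 0" | "j = m" | "1 \<le> j \<and> j < m" using j by linarith
    then show ?thesis
    proof cases
      case 1 then show ?thesis using assms by (auto simp: yv_def vv_def)
    next
      case 2 then show ?thesis using assms by (auto simp: yv_def vv_def)
    next
      case 3 then have "0 < t j" "0 < t (Suc j)" using tpos by auto
      then show ?thesis using 3 by (auto simp: yv_def vv_def)
    qed
  qed
qed

lemma conv_zero:
  fixes u a b :: real
  assumes "0 < u" "u < 1" "0 \<le> a" "0 \<le> b" "u * a + (1 - u) * b = 0"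
  shows "a = 0 \<and> b = 0"
proof -
  have "0 \<le> u * a" "0 \<le> (1 - u) * b" using assms by simp_all
  then have "u * a = 0" "(1 - u) * b = 0" using assms(5) by linarith+
  then show ?thesis using assms(1,2) by simp
qed

lemma vv_vertex:
  assumes "k \<le> m" and tpos: "\<forall>j\<in>{1..m}. 0 < t j"
  shows "vv m t k \<in> vertices (Pset m t)"
  unfolding vertices_def
proof (intro CollectI conjI notI)
  show "vv m t k \<in> Pset m t" by (rule vv_in[OF assms])
  assume "\<exists>a\<in>Pset m t. \<exists>b\<in>Pset m t. a \<noteq> b \<and> (\<exists>u. 0 < u \<and> u < 1 \<and> vv m t k = (\<lambda>i. u * a i + (1 - u) * b i))"
  then obtain a b u where ab: "a \<in> Pset m t" "b \<in> Pset m t" "a \<noteq> b" "0 < u" "u < 1"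
    and e: "vv m t k = (\<lambda>i. u * a i + (1 - u) * b i)" by blast
  have "a = b"
  proof
    fix j
    show "a j = b j"
    proof (cases "j \<in> {1..m}")
      case False
      then show ?thesis using ab(1,2) by (simp add: Pset_iff)
    next
      case True
      have tj: "0 < t j" using tpos True by simp
      have ej: "vv m t k j = u * a j + (1 - u) * b j" using e by (rule fun_cong)
      note ba = x_bounds[OF ab(1) True tj] and bb = x_bounds[OF ab(2) True tj]
      show ?thesis
      proof (cases "k < j")
        case True
        then have "vv m t k j = real (t j)" using \<open>j \<in> {1..m}\<close> by (simp add: vv_def)
        then have "u * (real (t j) - a j) + (1 - u) * (real (t j) - b j) = 0"
          using ej by (simp add: algebra_simps)
        then have "real (t j) - a j = 0 \<and> real (t j) - b j = 0"
          using conv_zero[OF ab(4,5), of "real (t j) - a j" "real (t j) - b j"] ba bb by simp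
        then show ?thesis by simp
      next
        case False
        then have "vv m t k j = 0" by (simp add: vv_def)
        then have "a j = 0 \<and> b j = 0" using conv_zero[OF ab(4,5)] ba bb ej by simp
        then show ?thesis by simp
      qed
    qed
  qed
  then show False using ab(3) by simp
qed

definition gp :: "real \<Rightarrow> real" where "gp s = (3 * s - s * s) / 2"
definition gm :: "real \<Rightarrow> real" where "gm s = (s + s * s) / 2"

lemma gp_mono: "0 \<le> s \<Longrightarrow> s \<le> s' \<Longrightarrow> s' \<le> 1 \<Longrightarrow> gp s \<le> gp s'"
proof -
  assume a: "0 \<le> s" "s \<le> s'" "s' \<le> 1"
  have e: "(3 * s' - s' * s') - (3 * s - s * s) = (s' - s) * (3 - s - s')" by (simp add: algebra_simps)
  have "0 \<le> (s' - s) * (3 - s - s')" using a by (intro mult_nonneg_nonneg) auto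
  then have "3 * s - s * s \<le> 3 * s' - s' * s'" using e by linarith
  then show ?thesis unfolding gp_def by (rule divide_right_mono) simp
qed

lemma gm_mono: "0 \<le> s \<Longrightarrow> s \<le> s' \<Longrightarrow> s' \<le> 1 \<Longrightarrow> gm s \<le> gm s'"
proof -
  assume a: "0 \<le> s" "s \<le> s'" "s' \<le> 1"
  have e: "(s' + s' * s') - (s + s * s) = (s' - s) * (1 + s + s')" by (simp add: algebra_simps)
  have "0 \<le> (s' - s) * (1 + s + s')" using a by (intro mult_nonneg_nonneg) auto
  then have "s + s * s \<le> s' + s' * s'" using e by linarith
  then show ?thesis unfolding gm_def by (rule divide_right_mono) simp
qed

lemma g_ends: "gp 0 = 0" "gp 1 = 1" "gm 0 = 0" "gm 1 = 1"
  by (simp_all add: gp_def gm_def)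

lemma perturb_in:
  assumes x: "x \<in> Pset m t" and tpos: "\<forall>j\<in>{1..m}. 0 < t j"
    and gmono: "\<And>s s'. 0 \<le> s \<Longrightarrow> s \<le> s' \<Longrightarrow> s' \<le> 1 \<Longrightarrow> g s \<le> g s'"
    and g0: "g 0 = 0" and g1: "g 1 = 1"
  shows "(\<lambda>i. if i \<in> {1..m} then real (t i) * g (x i / real (t i)) else 0) \<in> Pset m t"
proof -
  let ?a = "\<lambda>i. if i \<in> {1..m} then real (t i) * g (x i / real (t i)) else 0"
  have ya: "yv m t ?a j = g (yv m t x j)" if "j \<le> Suc m" for j
  proof -
    have "j = 0 \<or> j = Suc m \<or> j \<in> {1..m}" using that by auto
    then consider "j = 0" | "j = Suc m" | "j \<in> {1..m}" by blast
    then show ?thesis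
    proof cases
      case 1 then show ?thesis by (simp add: yv_def g0)
    next
      case 2 then show ?thesis by (simp add: yv_def g1)
    next
      case 3
      then have "0 < t j" using tpos by simp
      then show ?thesis using 3 by (simp add: yv_def)
    qed
  qed
  have c: "\<forall>j\<le>m. yv m t x j \<le> yv m t x (Suc j)" using x by (simp add: Pset_iff)
  show ?thesis unfolding Pset_iff
  proof (intro conjI allI impI)
    fix j assume "j \<notin> {1..m}" then show "?a j = 0" by auto
  next
    fix j assume j: "j \<le> m"
    have "g (yv m t x j) \<le> g (yv m t x (Suc j))"
      using gmono c j y_bounds[OF x, of j] y_bounds[OF x, of "Suc j"] by simp
    then show "yv m t ?a j \<le> yv m t ?a (Suc j)" using ya[of j] ya[of "Suc j"] j by simp
  qed
qed

lemma vertex_is_vv: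
  assumes v: "x \<in> vertices (Pset m t)" and tpos: "\<forall>j\<in>{1..m}. 0 < t j"
  shows "\<exists>k\<le>m. x = vv m t k"
proof -
  have x: "x \<in> Pset m t" using v by (simp add: vertices_def)
  have nv: "\<not> (\<exists>a\<in>Pset m t. \<exists>b\<in>Pset m t. a \<noteq> b \<and>
       (\<exists>u::real. 0 < u \<and> u < 1 \<and> x = (\<lambda>i. u * a i + (1 - u) * b i)))"
    using v by (simp add: vertices_def)
  have B: "\<forall>j\<in>{1..m}. x j = 0 \<or> x j = real (t j)"
  proof (rule ccontr)
    assume "\<not> (\<forall>j\<in>{1..m}. x j = 0 \<or> x j = real (t j))"
    then obtain j where j: "j \<in> {1..m}" "x j \<noteq> 0" "x j \<noteq> real (t j)" by blast
    have tj: "0 < t j" using tpos j by simp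
    have xb: "0 < x j" "x j < real (t j)" using x_bounds[OF x j(1) tj] j by auto
    define a where "a = (\<lambda>i. if i \<in> {1..m} then real (t i) * gp (x i / real (t i)) else 0)"
    define b where "b = (\<lambda>i. if i \<in> {1..m} then real (t i) * gm (x i / real (t i)) else 0)"
    have aP: "a \<in> Pset m t" unfolding a_def by (rule perturb_in[OF x tpos gp_mono g_ends(1,2)])
    have bP: "b \<in> Pset m t" unfolding b_def by (rule perturb_in[OF x tpos gm_mono g_ends(3,4)])
    define s where "s = x j / real (t j)"
    have s: "0 < s" "s < 1" using xb tj by (simp_all add: s_def)
    have "gp s - gm s = ((3 * s - s * s) - (s + s * s)) / 2" unfolding gp_def gm_def by (rule diff_divide_distrib[symmetric])
    also have "(3 * s - s * s) - (s + s * s) = 2 * (s * (1 - s))" by (simp add: algebra_simps)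
    finally have "gp s - gm s = s * (1 - s)" by simp
    then have "a j - b j = real (t j) * (s * (1 - s))" using j(1) by (simp add: a_def b_def s_def right_diff_distrib[symmetric])
    moreover have "real (t j) * (s * (1 - s)) > 0" using s tj by simp
    ultimately have ab: "a \<noteq> b" by auto
    have xeq: "x = (\<lambda>i. (1/2) * a i + (1 - 1/2) * b i)"
    proof
      fix i show "x i = (1/2) * a i + (1 - 1/2) * b i"
      proof (cases "i \<in> {1..m}")
        case True
        then have "0 < t i" using tpos by simp
        have g2: "gp (x i / real (t i)) + gm (x i / real (t i)) = 2 * (x i / real (t i))"
        proof -
          have "gp (x i / real (t i)) + gm (x i / real (t i)) = ((3 * (x i / real (t i)) - (x i / real (t i)) * (x i / real (t i))) + ((x i / real (t i)) + (x i / real (t i)) * (x i / real (t i)))) / 2"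
            unfolding gp_def gm_def by (rule add_divide_distrib[symmetric])
          also have "(3 * (x i / real (t i)) - (x i / real (t i)) * (x i / real (t i))) + ((x i / real (t i)) + (x i / real (t i)) * (x i / real (t i))) = 2 * (2 * (x i / real (t i)))"
            by (simp add: algebra_simps)
          finally show ?thesis by simp
        qed
        have "(1/2) * a i + (1 - 1/2) * b i = real (t i) * (gp (x i / real (t i)) + gm (x i / real (t i))) / 2"
          using True by (simp add: a_def b_def algebra_simps)
        also have "\<dots> = x i" unfolding g2 using \<open>0 < t i\<close> by simp
        finally show ?thesis by simp
      next
        case False
        then have "x i = 0" using x by (simp add: Pset_iff)
        moreover have "a i = 0" "b i = 0" using False by (auto simp: a_def b_def)
        ultimately show ?thesis by simp
      qed
    qed
    have "\<exists>a\<in>Pset m t. \<exists>b\<in>Pset m t. a \<noteq> b \<and> (\<exists>u::real. 0 < u \<and> u < 1 \<and> x = (\<lambda>i. u * a i + (1 - u) * b i))"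
    proof (intro bexI conjI)
      show "\<exists>u::real. 0 < u \<and> u < 1 \<and> x = (\<lambda>i. u * a i + (1 - u) * b i)"
        using xeq by (intro exI[of _ "1/2"]) simp
    qed (fact ab aP bP)+
    then show False using nv by blast
  qed
  define K where "K = {j. j \<le> m \<and> yv m t x j = 0}"
  have K0: "0 \<in> K" by (simp add: K_def yv_def)
  have Kf: "finite K" by (simp add: K_def)
  define k where "k = Max K"
  have kK: "k \<in> K" using Max_in[OF Kf] K0 unfolding k_def by auto
  have km: "k \<le> m" using kK by (simp add: K_def)
  have c: "\<forall>j\<le>m. yv m t x j \<le> yv m t x (Suc j)" using x by (simp add: Pset_iff)
  have "x = vv m t k"
  proof
    fix j
    show "x j = vv m t k j"
    proof (cases "j \<in> {1..m}")
      case False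
      then show ?thesis using x by (auto simp: Pset_iff vv_def)
    next
      case True
      have tj: "0 < t j" using tpos True by simp
      have yj: "yv m t x j = x j / real (t j)" using True by (simp add: yv_def)
      show ?thesis
      proof (cases "j \<le> k")
        case True
        have "yv m t x j \<le> yv m t x k" using chain_mono[OF c True] km by simp
        moreover have "yv m t x k = 0" using kK by (simp add: K_def)
        moreover have "0 \<le> yv m t x j" using y_bounds[OF x, of j] \<open>j \<in> {1..m}\<close> by simp
        ultimately have "x j / real (t j) = 0" using yj by simp
        then have "x j = 0" using tj by simp
        then show ?thesis using True by (simp add: vv_def)
      next
        case False
        have "j \<notin> K" using False Max_ge[OF Kf] unfolding k_def by fastforce
        then have "yv m t x j \<noteq> 0" using \<open>j \<in> {1..m}\<close> by (simp add: K_def)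
        then have "x j \<noteq> 0" using yj by simp
        then have "x j = real (t j)" using B \<open>j \<in> {1..m}\<close> by blast
        then show ?thesis using False \<open>j \<in> {1..m}\<close> by (simp add: vv_def)
      qed
    qed
  qed
  then show ?thesis using km by blast
qed

lemma vertices_eq:
  assumes tpos: "\<forall>j\<in>{1..m}. 0 < t j"
  shows "vertices (Pset m t) = vv m t ` {0..m}"
  using vertex_is_vv[OF _ tpos] vv_vertex[OF _ tpos] by fastforce

lemma vv_inj:
  assumes tpos: "\<forall>j\<in>{1..m}. 0 < t j"
  shows "inj_on (vv m t) {0..m}"
proof (rule inj_onI)
  fix k k' assume k: "k \<in> {0..m}" and k': "k' \<in> {0..m}" and e: "vv m t k = vv m t k'"
  show "k = k'"
  proof (rule ccontr)
    assume "k \<noteq> k'"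
    then consider "k < k'" | "k' < k" by linarith
    then show False
    proof cases
      case 1
      have "vv m t k k' = vv m t k' k'" using e by simp
      moreover have "0 < t k'" using tpos 1 k' by simp
      ultimately show False using 1 k' by (simp add: vv_def)
    next
      case 2
      have "vv m t k k = vv m t k' k" using e by simp
      moreover have "0 < t k" using tpos 2 k by simp
      ultimately show False using 2 k by (simp add: vv_def)
    qed
  qed
qed


definition Sx :: "nat \<Rightarrow> (nat \<Rightarrow> nat) \<Rightarrow> (nat \<Rightarrow> int) \<Rightarrow> nat \<Rightarrow> nat \<Rightarrow> real" where
  "Sx m t x h j = (if j = 0 then 0 else if j = Suc m then real h else real_of_int (x j) / real (t j))"

definition PO :: "nat \<Rightarrow> (nat \<Rightarrow> nat) \<Rightarrow> ((nat \<Rightarrow> int) \<times> nat) set" where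
  "PO m t = {(x, h). (\<forall>j. j \<notin> {1..m} \<longrightarrow> x j = 0) \<and>
      (\<forall>j\<le>m. Sx m t x h j < Sx m t x h (Suc j) \<and> Sx m t x h (Suc j) < Sx m t x h j + 1)}"

lemma sum_vv:
  assumes tpos: "\<forall>j\<in>{1..m}. 0 < t j"
  shows "(\<Sum>v\<in>vv m t ` {0..m}. lam v * v j) =
     (if j \<in> {1..m} then real (t j) * (\<Sum>k<j. lam (vv m t k)) else 0)"
proof -
  have "(\<Sum>v\<in>vv m t ` {0..m}. lam v * v j) = (\<Sum>k\<in>{0..m}. lam (vv m t k) * vv m t k j)"
    by (rule sum.reindex[OF vv_inj[OF tpos], unfolded comp_def])
  also have "\<dots> = (if j \<in> {1..m} then real (t j) * (\<Sum>k<j. lam (vv m t k)) else 0)"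
  proof (cases "j \<in> {1..m}")
    case True
    have "(\<Sum>k\<in>{0..m}. lam (vv m t k) * vv m t k j) = (\<Sum>k\<in>{0..m}. if k < j then lam (vv m t k) * real (t j) else 0)"
      using True by (intro sum.cong) (auto simp: vv_def)
    also have "\<dots> = (\<Sum>k\<in>{0..m} \<inter> {k. k < j}. lam (vv m t k) * real (t j))"
      by (simp add: sum.inter_restrict)
    also have "{0..m} \<inter> {k. k < j} = {..<j}" using True by auto
    also have "(\<Sum>k<j. lam (vv m t k) * real (t j)) = real (t j) * (\<Sum>k<j. lam (vv m t k))"
      by (simp add: sum_distrib_left mult.commute)
    finally show ?thesis using True by simp
  next
    case False
    then show ?thesis by (auto simp: vv_def intro!: sum.neutral)
  qed
  finally show ?thesis .
qed

lemma sum_vv1: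
  assumes tpos: "\<forall>j\<in>{1..m}. 0 < t j"
  shows "(\<Sum>v\<in>vv m t ` {0..m}. lam v) = (\<Sum>k<Suc m. lam (vv m t k))"
proof -
  have "(\<Sum>v\<in>vv m t ` {0..m}. lam v) = (\<Sum>k\<in>{0..m}. lam (vv m t k))"
    by (rule sum.reindex[OF vv_inj[OF tpos], unfolded comp_def])
  also have "(\<Sum>k\<in>{0..m}. lam (vv m t k)) = (\<Sum>k<Suc m. lam (vv m t k))" by (rule sum.cong) auto
  finally show ?thesis .
qed

lemma POL_eq:
  assumes tpos: "\<forall>j\<in>{1..m}. 0 < t j"
  shows "par_open_lattice (vv m t ` {0..m}) = PO m t"
proof (rule set_eqI)
  fix p :: "(nat \<Rightarrow> int) \<times> nat"
  obtain x h where p: "p = (x, h)" by (cases p)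
  show "p \<in> par_open_lattice (vv m t ` {0..m}) \<longleftrightarrow> p \<in> PO m t"
  proof
    assume "p \<in> par_open_lattice (vv m t ` {0..m})"
    then obtain lam :: "(nat \<Rightarrow> real) \<Rightarrow> real" where
      l1: "\<forall>v\<in>vv m t ` {0..m}. 0 < lam v \<and> lam v < 1" and
      l2: "\<forall>j. real_of_int (x j) = (\<Sum>v\<in>vv m t ` {0..m}. lam v * v j)" and
      l3: "real h = (\<Sum>v\<in>vv m t ` {0..m}. lam v)"
      unfolding par_open_lattice_def p by blast
    define P where "P = (\<lambda>j. \<Sum>k<j. lam (vv m t k))"
    have xj: "real_of_int (x j) = (if j \<in> {1..m} then real (t j) * P j else 0)" for j
      using l2 sum_vv[OF tpos, of lam j] unfolding P_def by simp
    have SP: "Sx m t x h j = P j" if "j \<le> Suc m" for j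
    proof -
      have "j = 0 \<or> j = Suc m \<or> j \<in> {1..m}" using that by auto
      then consider "j = 0" | "j = Suc m" | "j \<in> {1..m}" by blast
      then show ?thesis
      proof cases
        case 1 then show ?thesis by (simp add: Sx_def P_def)
      next
        case 2 then show ?thesis using l3 sum_vv1[OF tpos, of lam] by (simp add: Sx_def P_def)
      next
        case 3
        then have "0 < t j" using tpos by simp
        then show ?thesis using 3 xj[of j] by (simp add: Sx_def)
      qed
    qed
    have "\<forall>j. j \<notin> {1..m} \<longrightarrow> x j = 0"
    proof (intro allI impI)
      fix j assume "j \<notin> {1..m}"
      then have "real_of_int (x j) = 0" using xj[of j] by (simp only: if_not_P if_False)
      then show "x j = 0" by simp
    qed
    moreover have "\<forall>j\<le>m. Sx m t x h j < Sx m t x h (Suc j) \<and> Sx m t x h (Suc j) < Sx m t x h j + 1"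
    proof (intro allI impI)
      fix j assume j: "j \<le> m"
      have "Sx m t x h (Suc j) - Sx m t x h j = lam (vv m t j)" using SP[of j] SP[of "Suc j"] j
        by (simp add: P_def)
      moreover have "0 < lam (vv m t j) \<and> lam (vv m t j) < 1" using l1 j by simp
      ultimately show "Sx m t x h j < Sx m t x h (Suc j) \<and> Sx m t x h (Suc j) < Sx m t x h j + 1" by linarith
    qed
    ultimately show "p \<in> PO m t" unfolding PO_def p by blast
  next
    assume "p \<in> PO m t"
    then have h1: "\<forall>j. j \<notin> {1..m} \<longrightarrow> x j = 0"
      and h2: "\<forall>j\<le>m. Sx m t x h j < Sx m t x h (Suc j) \<and> Sx m t x h (Suc j) < Sx m t x h j + 1"
      unfolding PO_def p by blast+
    define lam where "lam = (\<lambda>w. Sx m t x h (Suc (the_inv_into {0..m} (vv m t) w)) - Sx m t x h (the_inv_into {0..m} (vv m t) w))"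
    have lk: "lam (vv m t k) = Sx m t x h (Suc k) - Sx m t x h k" if "k \<le> m" for k
      unfolding lam_def using the_inv_into_f_f[OF vv_inj[OF tpos], of k] that by simp
    have tele: "(\<Sum>k<j. lam (vv m t k)) = Sx m t x h j" if "j \<le> Suc m" for j
    proof -
      have "(\<Sum>k<j. lam (vv m t k)) = (\<Sum>k<j. Sx m t x h (Suc k) - Sx m t x h k)"
        using that lk by (intro sum.cong) auto
      also have "\<dots> = Sx m t x h j - Sx m t x h 0" by (rule sum_lessThan_telescope)
      finally show ?thesis by (simp add: Sx_def)
    qed
    have "\<forall>v\<in>vv m t ` {0..m}. 0 < lam v \<and> lam v < 1"
    proof
      fix v assume "v \<in> vv m t ` {0..m}"
      then obtain k where k: "k \<le> m" "v = vv m t k" by auto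
      then show "0 < lam v \<and> lam v < 1" using lk[OF k(1)] h2 by force
    qed
    moreover have "\<forall>j. real_of_int (x j) = (\<Sum>v\<in>vv m t ` {0..m}. lam v * v j)"
    proof
      fix j
      show "real_of_int (x j) = (\<Sum>v\<in>vv m t ` {0..m}. lam v * v j)"
      proof (cases "j \<in> {1..m}")
        case True
        then have "0 < t j" using tpos by simp
        moreover have "(\<Sum>k<j. lam (vv m t k)) = real_of_int (x j) / real (t j)"
          using tele[of j] True by (simp add: Sx_def)
        ultimately show ?thesis using sum_vv[OF tpos, of lam j] True by simp
      next
        case False
        then show ?thesis using h1 sum_vv[OF tpos, of lam j] by auto
      qed
    qed
    moreover have "real h = (\<Sum>v\<in>vv m t ` {0..m}. lam v)"
      using sum_vv1[OF tpos, of lam] tele[of "Suc m"] by (simp add: Sx_def)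
    ultimately show "p \<in> par_open_lattice (vv m t ` {0..m})"
      unfolding par_open_lattice_def p by blast
  qed
qed

lemma dpoly_PO:
  assumes tpos: "\<forall>j\<in>{1..m}. 0 < t j"
  shows "d_poly m t z = (\<Sum>p\<in>PO m t. z ^ snd p)"
  unfolding d_poly_def lstar_def vertices_eq[OF tpos] POL_eq[OF tpos] ..


definition TT :: "nat \<Rightarrow> (nat \<Rightarrow> int) \<Rightarrow> nat \<Rightarrow> real" where
  "TT r a j = real_of_int (a j) / (real j * real r)"

definition Tx :: "nat \<Rightarrow> nat \<Rightarrow> (nat \<Rightarrow> int) \<Rightarrow> nat \<Rightarrow> nat \<Rightarrow> real" where
  "Tx r n a h i = (if i = Suc n then real h else TT r a i)"

definition RC :: "nat \<Rightarrow> nat \<Rightarrow> (nat \<Rightarrow> int) \<Rightarrow> nat \<Rightarrow> bool" where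
  "RC r n a h = (\<forall>i\<in>{1..n}. Tx r n a h i < Tx r n a h (Suc i) \<and> Tx r n a h (Suc i) < Tx r n a h i + 1)"

definition Bset :: "nat \<Rightarrow> nat \<Rightarrow> (nat \<Rightarrow> int) set" where
  "Bset r n = {a. (\<forall>j. j \<notin> {1..n} \<longrightarrow> a j = 0) \<and> 0 \<le> a 1 \<and> a 1 < int r \<and>
     (\<forall>j\<in>{1..<n}. a j * int (Suc j) < a (Suc j) * int j \<and>
        a (Suc j) * int j < a j * int (Suc j) + int (j * Suc j * r))}"

definition Aset :: "nat \<Rightarrow> nat \<Rightarrow> ((nat \<Rightarrow> int) \<times> nat) set" where
  "Aset r n = {(a, h). a \<in> Bset r n \<and> a n < int (h * (n * r)) \<and> int (h * (n * r)) < a n + int (n * r)}"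

lemma fr_less:
  fixes x y d1 d2 :: real
  assumes "0 < d1" "0 < d2"
  shows "x / d1 < y / d2 \<longleftrightarrow> x * d2 < y * d1"
proof -
  have "x / d1 < y / d2 \<longleftrightarrow> x < (y / d2) * d1" using assms(1) by (rule pos_divide_less_eq)
  also have "\<dots> \<longleftrightarrow> x < (y * d1) / d2" by simp
  also have "\<dots> \<longleftrightarrow> x * d2 < y * d1" using assms(2) by (rule pos_less_divide_eq)
  finally show ?thesis .
qed

lemma frac_conv:
  fixes A B :: int and j r :: nat
  assumes "0 < j" "0 < r"
  shows "real_of_int A / (real j * real r) < real_of_int B / (real (Suc j) * real r) \<longleftrightarrow> A * int (Suc j) < B * int j"
    and "real_of_int B / (real (Suc j) * real r) < real_of_int A / (real j * real r) + 1 \<longleftrightarrow>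
         B * int j < A * int (Suc j) + int (j * Suc j * r)"
proof -
  have p1: "0 < real j * real r" and p2: "0 < real (Suc j) * real r" using assms by simp_all
  have "real_of_int A / (real j * real r) < real_of_int B / (real (Suc j) * real r) \<longleftrightarrow>
        real_of_int A * (real (Suc j) * real r) < real_of_int B * (real j * real r)"
    using p1 p2 by (rule fr_less)
  also have "\<dots> \<longleftrightarrow> (real_of_int A * real (Suc j)) * real r < (real_of_int B * real j) * real r"
    by (simp add: mult.assoc)
  also have "\<dots> \<longleftrightarrow> real_of_int A * real (Suc j) < real_of_int B * real j"
    using assms by simp
  also have "\<dots> \<longleftrightarrow> real_of_int (A * int (Suc j)) < real_of_int (B * int j)" by simp
  also have "\<dots> \<longleftrightarrow> A * int (Suc j) < B * int j" by (rule of_int_less_iff)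
  finally show "real_of_int A / (real j * real r) < real_of_int B / (real (Suc j) * real r) \<longleftrightarrow> A * int (Suc j) < B * int j" .
  have "real_of_int B / (real (Suc j) * real r) < real_of_int A / (real j * real r) + 1 \<longleftrightarrow>
        real_of_int B / (real (Suc j) * real r) < (real_of_int A + real j * real r) / (real j * real r)"
  proof -
    have eq: "real_of_int A / (real j * real r) + 1 = (real_of_int A + real j * real r) / (real j * real r)"
      using p1 assms by (simp add: add_divide_distrib)
    show ?thesis unfolding eq ..
  qed
  also have "\<dots> \<longleftrightarrow> real_of_int B * (real j * real r) < (real_of_int A + real j * real r) * (real (Suc j) * real r)"
    using p2 p1 by (rule fr_less)
  also have "\<dots> \<longleftrightarrow> (real_of_int B * real j) * real r < (real_of_int A * real (Suc j) + real j * real (Suc j) * real r) * real r"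
    by (simp add: algebra_simps)
  also have "\<dots> \<longleftrightarrow> real_of_int B * real j < real_of_int A * real (Suc j) + real j * real (Suc j) * real r"
    using assms by simp
  also have "\<dots> \<longleftrightarrow> real_of_int (B * int j) < real_of_int (A * int (Suc j) + int (j * Suc j * r))" by (simp add: algebra_simps)
  also have "\<dots> \<longleftrightarrow> B * int j < A * int (Suc j) + int (j * Suc j * r)" by (rule of_int_less_iff)
  finally show "real_of_int B / (real (Suc j) * real r) < real_of_int A / (real j * real r) + 1 \<longleftrightarrow>
         B * int j < A * int (Suc j) + int (j * Suc j * r)" .
qed

lemma h_conv:
  fixes A :: int and h d :: nat
  assumes "0 < d"
  shows "real_of_int A / real d < real h \<longleftrightarrow> A < int (h * d)"
    and "real h < real_of_int A / real d + 1 \<longleftrightarrow> int (h * d) < A + int d"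
proof -
  have p: "0 < real d" using assms by simp
  have "real_of_int A / real d < real h \<longleftrightarrow> real_of_int A < real h * real d" using p by (simp add: divide_less_eq)
  also have "\<dots> \<longleftrightarrow> real_of_int A < real_of_int (int (h * d))" by simp
  also have "\<dots> \<longleftrightarrow> A < int (h * d)" by (rule of_int_less_iff)
  finally show "real_of_int A / real d < real h \<longleftrightarrow> A < int (h * d)" .
  have "real h < real_of_int A / real d + 1 \<longleftrightarrow> real h < (real_of_int A + real d) / real d" using p by (simp add: add_divide_distrib)
  also have "\<dots> \<longleftrightarrow> real h * real d < real_of_int A + real d" using p by (simp add: less_divide_eq)
  also have "\<dots> \<longleftrightarrow> real_of_int (int (h * d)) < real_of_int (A + int d)" by simp
  also have "\<dots> \<longleftrightarrow> int (h * d) < A + int d" by (rule of_int_less_iff)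
  finally show "real h < real_of_int A / real d + 1 \<longleftrightarrow> int (h * d) < A + int d" .
qed

lemma Aset_iff:
  assumes n: "0 < n" and r: "0 < r"
  shows "(a, h) \<in> Aset r n \<longleftrightarrow> (\<forall>j. j \<notin> {1..n} \<longrightarrow> a j = 0) \<and> 0 \<le> a 1 \<and> a 1 < int r \<and> RC r n a h"
proof -
  have "RC r n a h \<longleftrightarrow> (\<forall>j\<in>{1..<n}. a j * int (Suc j) < a (Suc j) * int j \<and>
        a (Suc j) * int j < a j * int (Suc j) + int (j * Suc j * r)) \<and>
        (a n < int (h * (n * r)) \<and> int (h * (n * r)) < a n + int (n * r))"
  proof -
    have split: "{1..n} = {1..<n} \<union> {n}" using n by auto
    have A: "(Tx r n a h j < Tx r n a h (Suc j) \<and> Tx r n a h (Suc j) < Tx r n a h j + 1) \<longleftrightarrow>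
          (a j * int (Suc j) < a (Suc j) * int j \<and> a (Suc j) * int j < a j * int (Suc j) + int (j * Suc j * r))"
      if j: "j \<in> {1..<n}" for j
    proof -
      have "Tx r n a h j = TT r a j" "Tx r n a h (Suc j) = TT r a (Suc j)" using j by (auto simp: Tx_def)
      then show ?thesis using frac_conv[where A="a j" and B="a (Suc j)" and j=j and r=r] j r by (simp add: TT_def)
    qed
    have B: "(Tx r n a h n < Tx r n a h (Suc n) \<and> Tx r n a h (Suc n) < Tx r n a h n + 1) \<longleftrightarrow>
          (a n < int (h * (n * r)) \<and> int (h * (n * r)) < a n + int (n * r))"
    proof -
      have "0 < n * r" using n r by simp
      moreover have "Tx r n a h n = real_of_int (a n) / real (n * r)" "Tx r n a h (Suc n) = real h"
        by (simp_all add: Tx_def TT_def)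
      ultimately show ?thesis using h_conv[where d="n * r" and A="a n" and h=h] by simp
    qed
    show ?thesis unfolding RC_def split using A B by auto
  qed
  then show ?thesis unfolding Aset_def Bset_def by auto
qed

lemma PO_mu:
  assumes n: "0 < n" and r: "0 < r"
  shows "PO n (\<lambda>j. j * r) = {p \<in> Aset r n. fst p 1 \<noteq> 0}"
proof (rule set_eqI)
  fix p :: "(nat \<Rightarrow> int) \<times> nat"
  obtain a h where p: "p = (a, h)" by (cases p)
  have SxT: "Sx n (\<lambda>j. j * r) a h j = (if j = 0 then 0 else Tx r n a h j)" for j
    by (simp add: Sx_def Tx_def TT_def)
  have "(\<forall>j\<le>n. Sx n (\<lambda>j. j * r) a h j < Sx n (\<lambda>j. j * r) a h (Suc j) \<and>
            Sx n (\<lambda>j. j * r) a h (Suc j) < Sx n (\<lambda>j. j * r) a h j + 1) \<longleftrightarrow>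
        (0 < Tx r n a h 1 \<and> Tx r n a h 1 < 1) \<and> RC r n a h"
  proof -
    have "{..n} = insert 0 {1..n}" by auto
    then have "(\<forall>j\<le>n. Sx n (\<lambda>j. j * r) a h j < Sx n (\<lambda>j. j * r) a h (Suc j) \<and>
            Sx n (\<lambda>j. j * r) a h (Suc j) < Sx n (\<lambda>j. j * r) a h j + 1) \<longleftrightarrow>
          (\<forall>j\<in>insert 0 {1..n}. Sx n (\<lambda>j. j * r) a h j < Sx n (\<lambda>j. j * r) a h (Suc j) \<and>
            Sx n (\<lambda>j. j * r) a h (Suc j) < Sx n (\<lambda>j. j * r) a h j + 1)" by (metis atMost_iff)
    also have "\<dots> \<longleftrightarrow> (0 < Tx r n a h 1 \<and> Tx r n a h 1 < 1) \<and> RC r n a h"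
      unfolding RC_def SxT by auto
    finally show ?thesis .
  qed
  moreover have "Tx r n a h 1 = real_of_int (a 1) / real r" using n by (simp add: Tx_def TT_def)
  moreover have "(0 < real_of_int (a 1) / real r \<and> real_of_int (a 1) / real r < 1) \<longleftrightarrow> 0 < a 1 \<and> a 1 < int r"
  proof -
    have "real_of_int (a 1) < real r \<longleftrightarrow> a 1 < int r" by (metis of_int_less_iff of_int_of_nat_eq)
    then show ?thesis using r by (simp add: divide_less_eq zero_less_divide_iff)
  qed
  ultimately show "p \<in> PO n (\<lambda>j. j * r) \<longleftrightarrow> p \<in> {p \<in> Aset r n. fst p 1 \<noteq> 0}"
    unfolding p PO_def using Aset_iff[OF n r, of a h] by auto
qed


lemma PO_s_iff:
  assumes n: "0 < n" and r: "0 < r" and a0: "a 0 = 0" and a1: "a 1 = 0"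
  shows "((\<lambda>j. a (Suc j)), h) \<in> PO (n - 1) (\<lambda>j. (j + 1) * r) \<longleftrightarrow> (a, h) \<in> Aset r n"
proof -
  let ?x = "\<lambda>j. a (Suc j)"
  have SxT: "Sx (n - 1) (\<lambda>j. (j + 1) * r) ?x h j = Tx r n a h (Suc j)" if "j \<le> n" for j
  proof -
    have "j = 0 \<or> j = n \<or> (1 \<le> j \<and> j < n)" using that by auto
    then show ?thesis
    proof (elim disjE)
      assume "j = 0" then show ?thesis using n a1 by (simp add: Sx_def Tx_def TT_def)
    next
      assume "j = n" then show ?thesis using n by (simp add: Sx_def Tx_def TT_def)
    next
      assume "1 \<le> j \<and> j < n" then show ?thesis using n by (simp add: Sx_def Tx_def TT_def algebra_simps)
    qed
  qed
  have C: "(\<forall>j\<le>n - 1. Sx (n - 1) (\<lambda>j. (j + 1) * r) ?x h j < Sx (n - 1) (\<lambda>j. (j + 1) * r) ?x h (Suc j) \<and>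
            Sx (n - 1) (\<lambda>j. (j + 1) * r) ?x h (Suc j) < Sx (n - 1) (\<lambda>j. (j + 1) * r) ?x h j + 1)
        \<longleftrightarrow> RC r n a h"
  proof -
    have "(\<forall>j\<le>n - 1. Sx (n - 1) (\<lambda>j. (j + 1) * r) ?x h j < Sx (n - 1) (\<lambda>j. (j + 1) * r) ?x h (Suc j) \<and>
            Sx (n - 1) (\<lambda>j. (j + 1) * r) ?x h (Suc j) < Sx (n - 1) (\<lambda>j. (j + 1) * r) ?x h j + 1)
        \<longleftrightarrow> (\<forall>j\<le>n - 1. Tx r n a h (Suc j) < Tx r n a h (Suc (Suc j)) \<and> Tx r n a h (Suc (Suc j)) < Tx r n a h (Suc j) + 1)"
      using SxT n by (intro all_cong) (simp add: Suc_le_eq)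
    also have "\<dots> \<longleftrightarrow> RC r n a h"
    proof -
      have "(\<forall>j\<le>n - 1. Tx r n a h (Suc j) < Tx r n a h (Suc (Suc j)) \<and> Tx r n a h (Suc (Suc j)) < Tx r n a h (Suc j) + 1)
          \<longleftrightarrow> (\<forall>i\<in>{1..n}. Tx r n a h i < Tx r n a h (Suc i) \<and> Tx r n a h (Suc i) < Tx r n a h i + 1)"
      proof
        assume H: "\<forall>j\<le>n - 1. Tx r n a h (Suc j) < Tx r n a h (Suc (Suc j)) \<and> Tx r n a h (Suc (Suc j)) < Tx r n a h (Suc j) + 1"
        show "\<forall>i\<in>{1..n}. Tx r n a h i < Tx r n a h (Suc i) \<and> Tx r n a h (Suc i) < Tx r n a h i + 1"
        proof
          fix i assume i: "i \<in> {1..n}"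
          then obtain j where "i = Suc j" "j \<le> n - 1" by (cases i) auto
          then show "Tx r n a h i < Tx r n a h (Suc i) \<and> Tx r n a h (Suc i) < Tx r n a h i + 1" using H by simp
        qed
      next
        assume H: "\<forall>i\<in>{1..n}. Tx r n a h i < Tx r n a h (Suc i) \<and> Tx r n a h (Suc i) < Tx r n a h i + 1"
        show "\<forall>j\<le>n - 1. Tx r n a h (Suc j) < Tx r n a h (Suc (Suc j)) \<and> Tx r n a h (Suc (Suc j)) < Tx r n a h (Suc j) + 1"
        proof (intro allI impI)
          fix j assume "j \<le> n - 1"
          then have "Suc j \<in> {1..n}" using n by auto
          then show "Tx r n a h (Suc j) < Tx r n a h (Suc (Suc j)) \<and> Tx r n a h (Suc (Suc j)) < Tx r n a h (Suc j) + 1"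
            using H by blast
        qed
      qed
      then show ?thesis unfolding RC_def .
    qed
    finally show ?thesis .
  qed
  have S: "(\<forall>j. j \<notin> {1..n - 1} \<longrightarrow> ?x j = 0) \<longleftrightarrow> (\<forall>j. j \<notin> {1..n} \<longrightarrow> a j = 0)"
  proof
    assume H: "\<forall>j. j \<notin> {1..n - 1} \<longrightarrow> ?x j = 0"
    show "\<forall>j. j \<notin> {1..n} \<longrightarrow> a j = 0"
    proof (intro allI impI)
      fix j assume j: "j \<notin> {1..n}"
      show "a j = 0"
      proof (cases j)
        case 0 then show ?thesis using a0 by simp
      next
        case (Suc k) then have "k \<notin> {1..n - 1}" using j n by auto
        then show ?thesis using H Suc by simp
      qed
    qed
  next
    assume H: "\<forall>j. j \<notin> {1..n} \<longrightarrow> a j = 0"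
    show "\<forall>j. j \<notin> {1..n - 1} \<longrightarrow> ?x j = 0"
    proof (intro allI impI)
      fix j assume j: "j \<notin> {1..n - 1}"
      show "?x j = 0"
      proof (cases "j = 0")
        case True then show ?thesis using a1 by simp
      next
        case False then have "Suc j \<notin> {1..n}" using j by auto
        then show ?thesis using H by simp
      qed
    qed
  qed
  show ?thesis unfolding PO_def Aset_iff[OF n r] using C S a1 r by simp
qed

lemma PO_s_img:
  assumes n: "0 < n" and r: "0 < r"
  shows "PO (n - 1) (\<lambda>j. (j + 1) * r) = (\<lambda>p. ((\<lambda>j. fst p (Suc j)), snd p)) ` {p \<in> Aset r n. fst p 1 = 0}"
proof (rule set_eqI)
  fix q :: "(nat \<Rightarrow> int) \<times> nat"
  obtain x h where q: "q = (x, h)" by (cases q)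
  show "q \<in> PO (n - 1) (\<lambda>j. (j + 1) * r) \<longleftrightarrow> q \<in> (\<lambda>p. ((\<lambda>j. fst p (Suc j)), snd p)) ` {p \<in> Aset r n. fst p 1 = 0}"
  proof
    assume H: "q \<in> PO (n - 1) (\<lambda>j. (j + 1) * r)"
    define a where "a = (\<lambda>j. if j = 0 then 0 else x (j - 1))"
    have x0: "x 0 = 0" using H by (simp add: q PO_def)
    have a0: "a 0 = 0" and a1: "a 1 = 0" using x0 by (simp_all add: a_def)
    have xa: "(\<lambda>j. a (Suc j)) = x" by (simp add: a_def)
    have "(a, h) \<in> Aset r n" using PO_s_iff[OF n r a0 a1, of h] H xa by (simp add: q)
    then show "q \<in> (\<lambda>p. ((\<lambda>j. fst p (Suc j)), snd p)) ` {p \<in> Aset r n. fst p 1 = 0}"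
      using a1 xa q by (intro image_eqI[of _ _ "(a, h)"]) auto
  next
    assume "q \<in> (\<lambda>p. ((\<lambda>j. fst p (Suc j)), snd p)) ` {p \<in> Aset r n. fst p 1 = 0}"
    then obtain a h' where H: "(a, h') \<in> Aset r n" "a 1 = 0" "q = ((\<lambda>j. a (Suc j)), h')" by auto
    have a0: "a 0 = 0" using H(1) by (simp add: Aset_def Bset_def)
    show "q \<in> PO (n - 1) (\<lambda>j. (j + 1) * r)" using PO_s_iff[OF n r a0 H(2), of h'] H by simp
  qed
qed

lemma PO_s_inj:
  "inj_on (\<lambda>p. ((\<lambda>j. fst p (Suc j)), snd p)) {p \<in> Aset r n. fst p 1 = 0}"
proof (rule inj_onI)
  fix p q assume p: "p \<in> {p \<in> Aset r n. fst p 1 = 0}" and q: "q \<in> {p \<in> Aset r n. fst p 1 = 0}"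
    and e: "((\<lambda>j. fst p (Suc j)), snd p) = ((\<lambda>j. fst q (Suc j)), snd q)"
  have "fst p 0 = 0" "fst q 0 = 0" using p q by (auto simp: Aset_def Bset_def)
  then have "fst p = fst q"
  proof -
    assume z: "fst p 0 = 0" "fst q 0 = 0"
    show "fst p = fst q"
    proof
      fix j show "fst p j = fst q j" using z e by (cases j) (auto dest: fun_cong[where x = "j - 1"])
    qed
  qed
  then show "p = q" using e by (simp add: prod_eq_iff)
qed


lemma window:
  fixes M D d :: int
  assumes M: "0 < M" and D1: "- M < D" and D2: "D < M"
  shows "(0 < d * M + D \<and> d * M + D < M) \<longleftrightarrow> (D \<noteq> 0 \<and> d = (if D < 0 then 1 else 0))"
proof (cases "d \<le> -1")
  case True
  then have "d * M \<le> (-1) * M" using M by (intro mult_right_mono) simp_all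
  then show ?thesis using True D2 by auto
next
  case False
  show ?thesis
  proof (cases "d \<ge> 2")
    case True
    then have "2 * M \<le> d * M" using M by (intro mult_right_mono) simp_all
    then show ?thesis using True D1 by auto
  next
    case False
    then have "d = 0 \<or> d = 1" using \<open>\<not> d \<le> -1\<close> by auto
    then show ?thesis using D1 D2 by auto
  qed
qed

lemma ext_key:
  fixes A B :: int and N r E :: nat
  assumes N: "1 \<le> N" and r: "0 < r" and A: "0 \<le> A" and E: "E < Suc N * r"
    and Bm: "B mod int (Suc N * r) = int E"
  shows "(A * int (Suc N) < B * int N \<and> B * int N < A * int (Suc N) + int (N * Suc N * r)) \<longleftrightarrow>
      (int E * int N - (A mod int (N * r)) * int (Suc N) \<noteq> 0 \<and>
       B = int (Suc N * r) * (A div int (N * r) + (if int E * int N - (A mod int (N * r)) * int (Suc N) < 0 then 1 else 0)) + int E)"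
proof -
  define R where "R = int (N * r)"
  define R' where "R' = int (Suc N * r)"
  define M where "M = int (N * Suc N * r)"
  define q where "q = A div R"
  define e where "e = A mod R"
  define q' where "q' = B div R'"
  define D where "D = int E * int N - e * int (Suc N)"
  have np: "0 < N * r" "0 < Suc N * r" "0 < N * Suc N * r" using N r by simp_all
  have Rp: "0 < R" "0 < R'" "0 < M" unfolding R_def R'_def M_def using np by (simp_all only: of_nat_0_less_iff)
  have Adec: "A = q * R + e" unfolding q_def e_def by simp
  have Bdec: "B = q' * R' + int E" unfolding q'_def R'_def using Bm by (metis div_mult_mod_eq)
  have e: "0 \<le> e" "e < R" unfolding e_def using Rp by simp_all
  have RM: "R * int (Suc N) = M" "R' * int N = M" by (simp_all add: R_def R'_def M_def algebra_simps)
  have A1: "A * int (Suc N) = q * M + e * int (Suc N)" unfolding Adec RM(1)[symmetric] by (simp add: algebra_simps)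
  have B1: "B * int N = q' * M + int E * int N" unfolding Bdec RM(2)[symmetric] by (simp add: algebra_simps)
  have Dlo: "- M < D"
  proof -
    have "e * int (Suc N) < R * int (Suc N)" using e by (intro mult_strict_right_mono) simp_all
    then have "e * int (Suc N) < M" unfolding RM .
    moreover have "0 \<le> int E * int N" by simp
    ultimately show ?thesis unfolding D_def by linarith
  qed
  have Dhi: "D < M"
  proof -
    have "int E < R'" unfolding R'_def using E by (simp only: of_nat_less_iff)
    then have "int E * int N < R' * int N" using N by (intro mult_strict_right_mono) simp_all
    then have "int E * int N < M" unfolding RM .
    moreover have "0 \<le> e * int (Suc N)" using e by simp
    ultimately show ?thesis unfolding D_def by linarith
  qed
  have "(A * int (Suc N) < B * int N \<and> B * int N < A * int (Suc N) + int (N * Suc N * r)) \<longleftrightarrow>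
        (0 < (q' - q) * M + D \<and> (q' - q) * M + D < M)"
    unfolding A1 B1 D_def M_def[symmetric] by (simp add: algebra_simps)
  also have "\<dots> \<longleftrightarrow> (D \<noteq> 0 \<and> q' - q = (if D < 0 then 1 else 0))" by (rule window[OF Rp(3) Dlo Dhi])
  also have "\<dots> \<longleftrightarrow> (D \<noteq> 0 \<and> B = R' * (q + (if D < 0 then 1 else 0)) + int E)"
  proof -
    have "q' - q = (if D < 0 then 1 else 0) \<longleftrightarrow> B = R' * (q + (if D < 0 then 1 else 0)) + int E"
    proof
      assume "q' - q = (if D < 0 then 1 else 0)"
      then show "B = R' * (q + (if D < 0 then 1 else 0)) + int E" unfolding Bdec by (simp add: algebra_simps)
    next
      assume H: "B = R' * (q + (if D < 0 then 1 else 0)) + int E"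
      have "int E < R'" unfolding R'_def using E by (simp only: of_nat_less_iff)
      then have "B div R' = q + (if D < 0 then 1 else 0)" unfolding H using Rp(2)
        by (simp add: mult.commute)
      then show "q' - q = (if D < 0 then 1 else 0)" unfolding q'_def by simp
    qed
    then show ?thesis by simp
  qed
  finally show ?thesis unfolding D_def e_def q_def R_def R'_def .
qed

lemma Bset_Suc:
  assumes N: "1 \<le> N"
  shows "b \<in> Bset r (Suc N) \<longleftrightarrow> b(Suc N := 0) \<in> Bset r N \<and>
     b N * int (Suc N) < b (Suc N) * int N \<and> b (Suc N) * int N < b N * int (Suc N) + int (N * Suc N * r)"
proof -
  have split: "{1..<Suc N} = insert N {1..<N}" using N by auto
  have sup: "(\<forall>j. j \<notin> {1..Suc N} \<longrightarrow> b j = 0) \<longleftrightarrow> (\<forall>j. j \<notin> {1..N} \<longrightarrow> (b(Suc N := 0)) j = 0)"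
    by (auto simp: le_Suc_eq)
  have ch: "(\<forall>j\<in>{1..<N}. (b(Suc N := 0)) j * int (Suc j) < (b(Suc N := 0)) (Suc j) * int j \<and>
        (b(Suc N := 0)) (Suc j) * int j < (b(Suc N := 0)) j * int (Suc j) + int (j * Suc j * r))
      \<longleftrightarrow> (\<forall>j\<in>{1..<N}. b j * int (Suc j) < b (Suc j) * int j \<and>
        b (Suc j) * int j < b j * int (Suc j) + int (j * Suc j * r))"
    by (intro ball_cong) auto
  have b1: "(b(Suc N := 0)) 1 = b 1" using N by simp
  show ?thesis unfolding Bset_def mem_Collect_eq sup ch b1 split by auto
qed

lemma Bset_nonneg:
  assumes "a \<in> Bset r N" "j \<in> {1..N}"
  shows "0 \<le> a j"
  using assms(2)
proof (induction j)
  case 0 then show ?case by simp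
next
  case (Suc j)
  show ?case
  proof (cases "j = 0")
    case True then show ?thesis using assms(1) by (simp add: Bset_def)
  next
    case False
    then have j: "j \<in> {1..<N}" using Suc.prems by auto
    then have "0 \<le> a j" using Suc.IH by simp
    moreover have "a j * int (Suc j) < a (Suc j) * int j" using assms(1) j by (simp add: Bset_def)
    ultimately have "0 < a (Suc j) * int j" by (smt (verit) mult_nonneg_nonneg of_nat_0_le_iff)
    then show ?thesis using False by (simp add: zero_less_mult_iff)
  qed
qed


definition Dv :: "nat \<Rightarrow> nat \<Rightarrow> nat \<Rightarrow> (nat \<Rightarrow> int) \<Rightarrow> int" where
  "Dv r N E a = int E * int N - (a N mod int (N * r)) * int (Suc N)"

definition extE :: "nat \<Rightarrow> nat \<Rightarrow> nat \<Rightarrow> (nat \<Rightarrow> int) \<Rightarrow> nat \<Rightarrow> int" where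
  "extE r N E a = a(Suc N := int (Suc N * r) * (a N div int (N * r) + (if Dv r N E a < 0 then 1 else 0)) + int E)"

lemma mod_aux:
  fixes R X e :: int
  assumes "0 \<le> e" "e < R"
  shows "(R * X + e) mod R = e" and "(R * X + e) div R = X"
proof -
  have "(e + X * R) mod R = e mod R" by (rule mod_mult_self1)
  also have "\<dots> = e" using assms by simp
  finally show "(R * X + e) mod R = e" by (simp add: algebra_simps)
  have "(e + X * R) div R = e div R + X" using assms by simp
  also have "e div R = 0" using assms by simp
  finally show "(R * X + e) div R = X" by (simp add: algebra_simps)
qed

lemma Bset_rec_set:
  assumes N: "1 \<le> N" and r: "0 < r" and E: "E < Suc N * r"
  shows "{b \<in> Bset r (Suc N). b (Suc N) mod int (Suc N * r) = int E} = extE r N E ` {a \<in> Bset r N. Dv r N E a \<noteq> 0}"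
proof (rule set_eqI)
  fix b
  have ER: "0 \<le> int E" "int E < int (Suc N * r)" using E by (simp_all only: of_nat_0_le_iff of_nat_less_iff)
  show "b \<in> {b \<in> Bset r (Suc N). b (Suc N) mod int (Suc N * r) = int E} \<longleftrightarrow> b \<in> extE r N E ` {a \<in> Bset r N. Dv r N E a \<noteq> 0}"
  proof
    assume "b \<in> {b \<in> Bset r (Suc N). b (Suc N) mod int (Suc N * r) = int E}"
    then have b: "b \<in> Bset r (Suc N)" and bm: "b (Suc N) mod int (Suc N * r) = int E" by auto
    define a where "a = b(Suc N := 0)"
    have aB: "a \<in> Bset r N" and ch: "b N * int (Suc N) < b (Suc N) * int N \<and> b (Suc N) * int N < b N * int (Suc N) + int (N * Suc N * r)"
      using b Bset_Suc[OF N] unfolding a_def by auto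
    have aN: "a N = b N" unfolding a_def by simp
    have A: "0 \<le> b N" using Bset_nonneg[OF aB, of N] N aN by simp
    have k: "Dv r N E a \<noteq> 0 \<and> b (Suc N) = int (Suc N * r) * (a N div int (N * r) + (if Dv r N E a < 0 then 1 else 0)) + int E"
      using ext_key[OF N r A E bm] ch aN by (simp add: Dv_def)
    have "extE r N E a = b" using k unfolding extE_def a_def by auto
    then show "b \<in> extE r N E ` {a \<in> Bset r N. Dv r N E a \<noteq> 0}" using aB k by blast
  next
    assume "b \<in> extE r N E ` {a \<in> Bset r N. Dv r N E a \<noteq> 0}"
    then obtain a where aB: "a \<in> Bset r N" and D: "Dv r N E a \<noteq> 0" and ba: "b = extE r N E a" by auto
    have aS: "a (Suc N) = 0" using aB by (simp add: Bset_def)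
    have bS: "b (Suc N) = int (Suc N * r) * (a N div int (N * r) + (if Dv r N E a < 0 then 1 else 0)) + int E"
      unfolding ba extE_def by simp
    have bm: "b (Suc N) mod int (Suc N * r) = int E" unfolding bS using mod_aux(1)[OF ER] .
    have bN: "b N = a N" unfolding ba extE_def by simp
    have rest: "b(Suc N := 0) = a" unfolding ba extE_def using aS by auto
    have A: "0 \<le> b N" using Bset_nonneg[OF aB, of N] N bN by simp
    have "b N * int (Suc N) < b (Suc N) * int N \<and> b (Suc N) * int N < b N * int (Suc N) + int (N * Suc N * r)"
      using ext_key[OF N r A E bm] D bS bN by (simp add: Dv_def)
    then have "b \<in> Bset r (Suc N)" using Bset_Suc[OF N] rest aB by simp
    then show "b \<in> {b \<in> Bset r (Suc N). b (Suc N) mod int (Suc N * r) = int E}" using bm by simp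
  qed
qed

lemma extE_inj: "inj_on (extE r N E) (Bset r N)"
proof (rule inj_onI)
  fix a a' assume a: "a \<in> Bset r N" and a': "a' \<in> Bset r N" and e: "extE r N E a = extE r N E a'"
  show "a = a'"
  proof
    fix j
    show "a j = a' j"
    proof (cases "j = Suc N")
      case True then show ?thesis using a a' by (simp add: Bset_def)
    next
      case False
      have "extE r N E a j = extE r N E a' j" using e by simp
      then show ?thesis using False by (simp add: extE_def)
    qed
  qed
qed

lemma extE_div:
  assumes "E < Suc N * r"
  shows "extE r N E a (Suc N) div int (Suc N * r) = a N div int (N * r) + (if Dv r N E a < 0 then 1 else 0)"
proof -
  have ER: "0 \<le> int E" "int E < int (Suc N * r)" using assms by (simp_all only: of_nat_0_le_iff of_nat_less_iff)
  show ?thesis unfolding extE_def using mod_aux(2)[OF ER] by simp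
qed

lemma Bset_one: "Bset r 1 = (\<lambda>e. (\<lambda>j. if j = 1 then e else 0)) ` {0..<int r}"
proof (rule set_eqI)
  fix a
  show "a \<in> Bset r 1 \<longleftrightarrow> a \<in> (\<lambda>e. (\<lambda>j. if j = 1 then e else 0)) ` {0..<int r}"
  proof
    assume "a \<in> Bset r 1"
    then have h: "\<forall>j. j \<noteq> 1 \<longrightarrow> a j = 0" "0 \<le> a 1" "a 1 < int r" by (auto simp: Bset_def)
    then have "a = (\<lambda>j. if j = 1 then a 1 else 0)" by auto
    then show "a \<in> (\<lambda>e. (\<lambda>j. if j = 1 then e else 0)) ` {0..<int r}" using h by (intro image_eqI[of _ _ "a 1"]) auto
  next
    assume "a \<in> (\<lambda>e. (\<lambda>j. if j = 1 then e else 0)) ` {0..<int r}"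
    then show "a \<in> Bset r 1" by (auto simp: Bset_def)
  qed
qed

lemma Bset_finite:
  assumes r: "0 < r"
  shows "finite (Bset r (Suc n))"
proof (induction n)
  case 0 then show ?case using Bset_one by simp
next
  case (Suc n)
  define N where "N = Suc n"
  have N: "1 \<le> N" by (simp add: N_def)
  have "Bset r (Suc N) \<subseteq> (\<Union>E\<in>{..<Suc N * r}. extE r N E ` Bset r N)"
  proof
    fix b assume b: "b \<in> Bset r (Suc N)"
    define E where "E = nat (b (Suc N) mod int (Suc N * r))"
    have "0 < Suc N * r" using r by simp
    then have p: "0 < int (Suc N * r)" by (simp only: of_nat_0_less_iff)
    have E1: "int E = b (Suc N) mod int (Suc N * r)" unfolding E_def using p by simp
    have E2: "E < Suc N * r" using p unfolding E_def by (simp add: nat_less_iff)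
    have "b \<in> {b \<in> Bset r (Suc N). b (Suc N) mod int (Suc N * r) = int E}" using b E1 by simp
    then have "b \<in> extE r N E ` {a \<in> Bset r N. Dv r N E a \<noteq> 0}" unfolding Bset_rec_set[OF N r E2] .
    then show "b \<in> (\<Union>E\<in>{..<Suc N * r}. extE r N E ` Bset r N)" using E2 by blast
  qed
  moreover have "finite (\<Union>E\<in>{..<Suc N * r}. extE r N E ` Bset r N)" using Suc.IH unfolding N_def by simp
  ultimately show ?case unfolding N_def by (rule finite_subset)
qed


definition LS :: "nat \<Rightarrow> real \<Rightarrow> nat \<Rightarrow> nat \<Rightarrow> real" where
  "LS r z N E = (\<Sum>a\<in>{a \<in> Bset r N. a N mod int (N * r) = int E}. z ^ nat (a N div int (N * r)))"

lemma LS_base: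
  assumes r: "0 < r" and E: "E < r"
  shows "LS r z 1 E = Lr r z 0 E"
proof -
  have S: "{a \<in> Bset r 1. a 1 mod int (1 * r) = int E} = {(\<lambda>j. if j = 1 then int E else 0)}"
  proof (rule set_eqI)
    fix a
    show "a \<in> {a \<in> Bset r 1. a 1 mod int (1 * r) = int E} \<longleftrightarrow> a \<in> {(\<lambda>j. if j = 1 then int E else 0)}"
    proof
      assume "a \<in> {a \<in> Bset r 1. a 1 mod int (1 * r) = int E}"
      then obtain e where e: "0 \<le> e" "e < int r" "a = (\<lambda>j. if j = 1 then e else 0)" "a 1 mod int r = int E"
        unfolding Bset_one by auto
      then have ee: "e = int E" by simp
      have "a = (\<lambda>j. if j = 1 then int E else 0)" unfolding e(3) ee ..
      then show "a \<in> {(\<lambda>j. if j = 1 then int E else 0)}" by simp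
    next
      assume "a \<in> {(\<lambda>j. if j = 1 then int E else 0)}"
      then show "a \<in> {a \<in> Bset r 1. a 1 mod int (1 * r) = int E}" using E unfolding Bset_one by auto
    qed
  qed
  show ?thesis unfolding LS_def S using E by simp
qed

lemma LS_step:
  assumes r: "0 < r" and IH: "\<And>E'. E' < Suc n * r \<Longrightarrow> LS r z (Suc n) E' = Lr r z n E'"
    and E: "E < Suc (Suc n) * r"
  shows "LS r z (Suc (Suc n)) E = Lr r z (Suc n) E"
proof -
  define N where "N = Suc n"
  have N: "1 \<le> N" by (simp add: N_def)
  have E': "E < Suc N * r" using E by (simp add: N_def)
  define S where "S = {a \<in> Bset r N. Dv r N E a \<noteq> 0}"
  define R where "R = int (N * r)"
  have Rp: "0 < R" unfolding R_def using r N by simp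
  have fS: "finite S" unfolding S_def using Bset_finite[OF r, of n] by (simp add: N_def)
  have injS: "inj_on (extE r N E) S" using extE_inj[of r N E] unfolding S_def by (rule inj_on_subset) auto
  have "LS r z (Suc N) E = (\<Sum>b\<in>extE r N E ` S. z ^ nat (b (Suc N) div int (Suc N * r)))"
    unfolding LS_def S_def Bset_rec_set[OF N r E', symmetric] ..
  also have "\<dots> = (\<Sum>a\<in>S. z ^ nat (extE r N E a (Suc N) div int (Suc N * r)))"
    by (rule sum.reindex[OF injS, unfolded comp_def])
  also have "\<dots> = (\<Sum>a\<in>S. (if Dv r N E a < 0 then z else 1) * z ^ nat (a N div R))"
  proof (rule sum.cong[OF refl])
    fix a assume a: "a \<in> S"
    have "0 \<le> a N" using Bset_nonneg[of a r N N] a N by (simp add: S_def)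
    then have q: "0 \<le> a N div R" using Rp by (simp add: pos_imp_zdiv_nonneg_iff)
    show "z ^ nat (extE r N E a (Suc N) div int (Suc N * r)) = (if Dv r N E a < 0 then z else 1) * z ^ nat (a N div R)"
      unfolding extE_div[OF E'] R_def[symmetric] using q by (simp add: nat_add_distrib)
  qed
  also have "\<dots> = (\<Sum>E'\<in>{..<N * r}. \<Sum>a\<in>{a \<in> S. nat (a N mod R) = E'}. (if Dv r N E a < 0 then z else 1) * z ^ nat (a N div R))"
  proof (rule sum.group[symmetric])
    show "finite S" by (rule fS)
    show "finite {..<N * r}" by simp
    show "(\<lambda>a. nat (a N mod R)) ` S \<subseteq> {..<N * r}"
    proof
      fix x assume "x \<in> (\<lambda>a. nat (a N mod R)) ` S"
      then obtain a where "x = nat (a N mod R)" by auto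
      moreover have "a N mod R < int (N * r)" using Rp unfolding R_def by simp
      moreover have "0 \<le> a N mod R" using Rp by simp
      ultimately show "x \<in> {..<N * r}" using nat_less_iff by simp
    qed
  qed
  also have "\<dots> = (\<Sum>E'\<in>{..<N * r}. (if E * N = E' * Suc N then 0 else if E * N < E' * Suc N then z else 1) * LS r z N E')"
  proof (rule sum.cong[OF refl])
    fix E' assume "E' \<in> {..<N * r}"
    have modeq: "nat (a N mod R) = E' \<longleftrightarrow> a N mod R = int E'" for a
      using Rp by auto
    have Dv': "a N mod R = int E' \<Longrightarrow> Dv r N E a = int (E * N) - int (E' * Suc N)" for a
      unfolding Dv_def R_def by (simp add: algebra_simps)
    show "(\<Sum>a\<in>{a \<in> S. nat (a N mod R) = E'}. (if Dv r N E a < 0 then z else 1) * z ^ nat (a N div R)) =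
       (if E * N = E' * Suc N then 0 else if E * N < E' * Suc N then z else 1) * LS r z N E'"
    proof (cases "E * N = E' * Suc N")
      case True
      have emp: "{a \<in> S. nat (a N mod R) = E'} = {}" using Dv' True modeq unfolding S_def by auto
      show ?thesis using True by (simp only: emp sum.empty) simp
    next
      case False
      have F: "int (E * N) \<noteq> int (E' * Suc N)" using False by (simp only: of_nat_eq_iff not_False_eq_True)
      have eqS: "{a \<in> S. nat (a N mod R) = E'} = {a \<in> Bset r N. a N mod int (N * r) = int E'}"
        using Dv' F modeq unfolding S_def R_def[symmetric] by auto
      have "(\<Sum>a\<in>{a \<in> S. nat (a N mod R) = E'}. (if Dv r N E a < 0 then z else 1) * z ^ nat (a N div R))
          = (\<Sum>a\<in>{a \<in> Bset r N. a N mod int (N * r) = int E'}. (if E * N < E' * Suc N then z else 1) * z ^ nat (a N div int (N * r)))"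
        unfolding eqS
      proof (rule sum.cong[OF refl])
        fix a assume "a \<in> {a \<in> Bset r N. a N mod int (N * r) = int E'}"
        then have "a N mod R = int E'" unfolding R_def by simp
        then have "Dv r N E a = int (E * N) - int (E' * Suc N)" by (rule Dv')
        then have "Dv r N E a < 0 \<longleftrightarrow> int (E * N) < int (E' * Suc N)" by linarith
        then have "Dv r N E a < 0 \<longleftrightarrow> E * N < E' * Suc N" by (simp only: of_nat_less_iff)
        then show "(if Dv r N E a < 0 then z else 1) * z ^ nat (a N div R) =
              (if E * N < E' * Suc N then z else 1) * z ^ nat (a N div int (N * r))" unfolding R_def by simp
      qed
      also have "\<dots> = (if E * N < E' * Suc N then z else 1) * LS r z N E'"
        unfolding LS_def by (rule sum_distrib_left[symmetric])
      finally show ?thesis using False by simp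
    qed
  qed
  also have "\<dots> = Lr r z (Suc n) E" using IH unfolding N_def by (simp add: Lr.simps)
  finally show ?thesis unfolding N_def .
qed

lemma LS_Lr:
  assumes r: "0 < r"
  shows "E < Suc n * r \<Longrightarrow> LS r z (Suc n) E = Lr r z n E"
proof (induction n arbitrary: E)
  case 0 then show ?case using LS_base[OF r] by simp
next
  case (Suc n) show ?case by (rule LS_step[OF r Suc.IH Suc.prems])
qed


lemma Aset_img:
  assumes n: "0 < n" and r: "0 < r"
  shows "Aset r n = (\<lambda>a. (a, Suc (nat (a n div int (n * r))))) ` {a \<in> Bset r n. a n mod int (n * r) \<noteq> 0}"
proof (rule set_eqI)
  fix p :: "(nat \<Rightarrow> int) \<times> nat"
  obtain a h where p: "p = (a, h)" by (cases p)
  define R where "R = int (n * r)"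
  have "0 < n * r" using n r by simp
  then have Rp: "0 < R" unfolding R_def by (simp only: of_nat_0_less_iff)
  define q where "q = a n div R"
  define e where "e = a n mod R"
  have adec: "a n = q * R + e" unfolding q_def e_def by simp
  have e: "0 \<le> e" "e < R" unfolding e_def using Rp by simp_all
  have hR: "int (h * (n * r)) = int h * R" unfolding R_def by simp
  have key: "a \<in> Bset r n \<Longrightarrow> (a n < int (h * (n * r)) \<and> int (h * (n * r)) < a n + int (n * r)) \<longleftrightarrow>
        (e \<noteq> 0 \<and> h = Suc (nat q))"
  proof -
    assume aB: "a \<in> Bset r n"
    have "0 \<le> a n" using Bset_nonneg[OF aB, of n] n by simp
    then have q0: "0 \<le> q" unfolding q_def using Rp by (simp add: pos_imp_zdiv_nonneg_iff)
    have "(a n < int (h * (n * r)) \<and> int (h * (n * r)) < a n + int (n * r)) \<longleftrightarrow>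
          (0 < (int h - q) * R + (- e) \<and> (int h - q) * R + (- e) < R)"
      unfolding hR adec R_def[symmetric] by (simp add: algebra_simps)
    also have "\<dots> \<longleftrightarrow> (- e \<noteq> 0 \<and> int h - q = (if - e < 0 then 1 else 0))"
      by (rule window) (use Rp e in auto)
    also have "\<dots> \<longleftrightarrow> (e \<noteq> 0 \<and> h = Suc (nat q))" using e q0 by auto
    finally show ?thesis .
  qed
  show "p \<in> Aset r n \<longleftrightarrow> p \<in> (\<lambda>a. (a, Suc (nat (a n div int (n * r))))) ` {a \<in> Bset r n. a n mod int (n * r) \<noteq> 0}"
  proof
    assume "p \<in> Aset r n"
    then have aB: "a \<in> Bset r n" and c: "a n < int (h * (n * r)) \<and> int (h * (n * r)) < a n + int (n * r)"
      unfolding p Aset_def by auto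
    then have "e \<noteq> 0 \<and> h = Suc (nat q)" using key by simp
    then show "p \<in> (\<lambda>a. (a, Suc (nat (a n div int (n * r))))) ` {a \<in> Bset r n. a n mod int (n * r) \<noteq> 0}"
      using aB unfolding p e_def q_def R_def by auto
  next
    assume "p \<in> (\<lambda>a. (a, Suc (nat (a n div int (n * r))))) ` {a \<in> Bset r n. a n mod int (n * r) \<noteq> 0}"
    then have aB: "a \<in> Bset r n" and "a n mod int (n * r) \<noteq> 0" and "h = Suc (nat (a n div int (n * r)))"
      unfolding p by auto
    then have "e \<noteq> 0 \<and> h = Suc (nat q)" unfolding e_def q_def R_def by simp
    then have "a n < int (h * (n * r)) \<and> int (h * (n * r)) < a n + int (n * r)" using key[OF aB] by simp
    then show "p \<in> Aset r n" using aB unfolding p Aset_def by simp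
  qed
qed

lemma Aset_finite: "0 < n \<Longrightarrow> 0 < r \<Longrightarrow> finite (Aset r n)"
  using Aset_img[of n r] Bset_finite[of r "n - 1"] by simp

lemma Aset_sum:
  assumes n: "0 < n" and r: "0 < r"
  shows "(\<Sum>p\<in>Aset r n. z ^ snd p) = (\<Sum>E\<in>{..<n * r} - {0}. z * LS r z n E)"
proof -
  define R where "R = int (n * r)"
  have "0 < n * r" using n r by simp
  then have Rp: "0 < R" unfolding R_def by (simp only: of_nat_0_less_iff)
  define T where "T = {a \<in> Bset r n. a n mod R \<noteq> 0}"
  have fT: "finite T" unfolding T_def using Bset_finite[OF r, of "n - 1"] n by simp
  have inj: "inj_on (\<lambda>a. (a, Suc (nat (a n div R)))) T" by (rule inj_onI) simp
  have "(\<Sum>p\<in>Aset r n. z ^ snd p) = (\<Sum>p\<in>(\<lambda>a. (a, Suc (nat (a n div R)))) ` T. z ^ snd p)"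
    unfolding Aset_img[OF n r] T_def R_def ..
  also have "\<dots> = (\<Sum>a\<in>T. z * z ^ nat (a n div R))"
    by (subst sum.reindex[OF inj]) (simp add: comp_def)
  also have "\<dots> = (\<Sum>E\<in>{..<n * r} - {0}. \<Sum>a\<in>{a \<in> T. nat (a n mod R) = E}. z * z ^ nat (a n div R))"
  proof (rule sum.group[symmetric])
    show "finite T" by (rule fT)
    show "finite ({..<n * r} - {0})" by simp
    show "(\<lambda>a. nat (a n mod R)) ` T \<subseteq> {..<n * r} - {0}"
    proof
      fix x assume "x \<in> (\<lambda>a. nat (a n mod R)) ` T"
      then obtain a where x: "x = nat (a n mod R)" and aT: "a \<in> T" by auto
      have "a n mod R < int (n * r)" using Rp unfolding R_def by simp
      moreover have "0 \<le> a n mod R" using Rp by simp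
      moreover have "a n mod R \<noteq> 0" using aT by (simp add: T_def)
      ultimately show "x \<in> {..<n * r} - {0}" using x nat_less_iff by simp
    qed
  qed
  also have "\<dots> = (\<Sum>E\<in>{..<n * r} - {0}. z * LS r z n E)"
  proof (rule sum.cong[OF refl])
    fix E assume E: "E \<in> {..<n * r} - {0}"
    have "{a \<in> T. nat (a n mod R) = E} = {a \<in> Bset r n. a n mod int (n * r) = int E}"
      using E Rp unfolding T_def R_def by auto
    then show "(\<Sum>a\<in>{a \<in> T. nat (a n mod R) = E}. z * z ^ nat (a n div R)) = z * LS r z n E"
      unfolding LS_def R_def by (simp add: sum_distrib_left)
  qed
  finally show ?thesis .
qed

lemma LHS_total:
  assumes n: "0 < n" and r: "0 < r"
  shows "d_poly (n - 1) (\<lambda>j. (j + 1) * r) z + d_poly n (\<lambda>j. j * r) z = (\<Sum>E\<in>{..<n * r} - {0}. z * Lr r z (n - 1) E)"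
proof -
  have t1: "\<forall>j\<in>{1..n - 1}. 0 < (j + 1) * r" using r by simp
  have t2: "\<forall>j\<in>{1..n}. 0 < j * r" using r by simp
  have fA: "finite (Aset r n)" by (rule Aset_finite[OF n r])
  have "d_poly (n - 1) (\<lambda>j. (j + 1) * r) z = (\<Sum>p\<in>{p \<in> Aset r n. fst p 1 = 0}. z ^ snd p)"
    unfolding dpoly_PO[OF t1] PO_s_img[OF n r] by (subst sum.reindex[OF PO_s_inj]) (simp add: comp_def)
  moreover have "d_poly n (\<lambda>j. j * r) z = (\<Sum>p\<in>{p \<in> Aset r n. fst p 1 \<noteq> 0}. z ^ snd p)"
    unfolding dpoly_PO[OF t2] PO_mu[OF n r] ..
  moreover have "(\<Sum>p\<in>{p \<in> Aset r n. fst p 1 = 0}. z ^ snd p) + (\<Sum>p\<in>{p \<in> Aset r n. fst p 1 \<noteq> 0}. z ^ snd p)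
      = (\<Sum>p\<in>Aset r n. z ^ snd p)"
  proof -
    have "(\<Sum>p\<in>{p \<in> Aset r n. fst p 1 = 0} \<union> {p \<in> Aset r n. fst p 1 \<noteq> 0}. z ^ snd p)
        = (\<Sum>p\<in>{p \<in> Aset r n. fst p 1 = 0}. z ^ snd p) + (\<Sum>p\<in>{p \<in> Aset r n. fst p 1 \<noteq> 0}. z ^ snd p)"
      by (rule sum.union_disjoint) (use fA in auto)
    moreover have "{p \<in> Aset r n. fst p 1 = 0} \<union> {p \<in> Aset r n. fst p 1 \<noteq> 0} = Aset r n" by auto
    ultimately show ?thesis by simp
  qed
  moreover have "(\<Sum>p\<in>Aset r n. z ^ snd p) = (\<Sum>E\<in>{..<n * r} - {0}. z * Lr r z (n - 1) E)"
  proof -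
    have "(\<Sum>p\<in>Aset r n. z ^ snd p) = (\<Sum>E\<in>{..<n * r} - {0}. z * LS r z n E)" by (rule Aset_sum[OF n r])
    also have "\<dots> = (\<Sum>E\<in>{..<n * r} - {0}. z * Lr r z (n - 1) E)"
    proof (rule sum.cong[OF refl])
      fix E assume "E \<in> {..<n * r} - {0}"
      then have "E < Suc (n - 1) * r" using n by simp
      then show "z * LS r z n E = z * Lr r z (n - 1) E" using LS_Lr[OF r, of E "n - 1" z] n by simp
    qed
    finally show ?thesis .
  qed
  ultimately show ?thesis by simp
qed

lemma phi_bij0: "bij_betw (phi N) ({..<N} - {0}) ({..<N} - {0})"
  by (rule bij_betwI[where g="phi N"]) (auto simp: phi_def)

theorem lemma4p11:
  fixes n r :: nat and z :: real
  assumes "0 < n" and "0 < r"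
  shows "d_poly (n - 1) (\<lambda>j. (j + 1) * r) z + d_poly n (\<lambda>j. j * r) z =
    (\<Sum>\<sigma>\<in>{\<sigma>\<in>colored_perms r n. bad_set n \<sigma> = {}}. z ^ cdes n \<sigma>)"
proof -
  have "(\<Sum>\<sigma>\<in>{\<sigma>\<in>colored_perms r n. bad_set n \<sigma> = {}}. z ^ cdes n \<sigma>)
      = (\<Sum>E\<in>{..<n * r} - {0}. Rr r z (n - 1) E)" by (rule RHS_total[OF assms(1)])
  also have "\<dots> = (\<Sum>E\<in>{..<n * r} - {0}. Rr r z (n - 1) (phi (n * r) E))"
    by (rule sum.reindex_bij_betw[OF phi_bij0, symmetric])
  also have "\<dots> = (\<Sum>E\<in>{..<n * r} - {0}. z * Lr r z (n - 1) E)"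
  proof (rule sum.cong[OF refl])
    fix E assume E: "E \<in> {..<n * r} - {0}"
    then have "E < Suc (n - 1) * r" using assms by simp
    then have "Rr r z (n - 1) (phi (Suc (n - 1) * r) E) = (if E = 0 then 1 else z) * Lr r z (n - 1) E"
      by (rule RL)
    then show "Rr r z (n - 1) (phi (n * r) E) = z * Lr r z (n - 1) E" using E assms by simp
  qed
  also have "\<dots> = d_poly (n - 1) (\<lambda>j. (j + 1) * r) z + d_poly n (\<lambda>j. j * r) z"
    by (rule LHS_total[OF assms, symmetric])
  finally show ?thesis by simp
qed

end
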